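(* Let $(A_i)_{i\ge1}$ be a sequence of $\mathbb{G}$-predictable sets with $A_i\in\mathcal{L}^o$ for all $i$. Then $\bigcup_{i\ge1}A_i\in\mathcal{L}^o$.
   Context: Let $(\Omega,\mathcal{A},\mathbb{Q})$ be a probability space with a right-continuous filtration $\mathbb{F}=(\mathcal{F}_t)_{t\ge0}$ such that $\mathcal{F}_0$ contains $\mathcal{N}^{\mathcal{F}_\infty}$, where for a $\sigma$-algebra $\mathcal{T}\subset\mathcal{A}$, $\mathcal{N}^{\mathcal{T}}$ denotes the $\sigma$-algebra generated by all subsets of $\mathcal{T}$-measurable $\mathbb{Q}$-null sets. Let $\tau$ be a random variable with values in $[0,\infty]$, let $\mathcal{N}=\mathcal{N}^{\sigma(\tau)\vee\mathcal{F}_\infty}$, and let $\mathbb{G}=(\mathcal{G}_t)_{t\ge0}$ with $\mathcal{G}_t=\mathcal{N}\vee\bigcap_{s>t}(\mathcal{F}_s\vee\sigma(\tau\wedge s))$. Identities between processes are understood up to indistinguishability outside an $\mathcal{N}$-measurable $\mathbb{Q}$-null set. For a function $Y''$ on $[0,\infty]\times(\mathbb{R}_+\times\Omega)$, $Y''(\tau)$ denotes the process $(t,\omega)\mapsto Y''(\tau(\omega),t,\omega)$. A $\mathbb{G}$-optional process $Y$ satisfies the optional splitting formula on a $\mathbb{G}$-optional set $A$ (at $\tau$ with respect to $\mathbb{F}$) if there exist $Y'\in\mathcal{O}(\mathbb{F})$ and a $\mathcal{B}[0,\infty]\otimes\mathcal{O}(\mathbb{F})$-measurable function $Y''$ with $Y\mathbf{1}_A=(Y'\mathbf{1}_{[0,\tau)}+Y''(\tau)\mathbf{1}_{[\tau,\infty)})\mathbf{1}_A$.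 $\mathcal{L}^o$ is the family of $\mathbb{G}$-optional sets $A$ such that every $\mathbb{G}$-optional process satisfies the optional splitting formula on $A$. *)

theory Defs
  imports "HOL-Probability.Probability"
begin

text \<open>Sigma-algebras on the sample space \<Omega> = space Q are represented as sets of sets.
  Processes are functions on pairs (time, outcome); the time domain is [0,\<infinity>).\<close>

definition adapted :: "'a set \<Rightarrow> (real \<Rightarrow> 'a set set) \<Rightarrow> (real \<times> 'a \<Rightarrow> real) \<Rightarrow> bool" where
  "adapted \<Omega> F X \<longleftrightarrow>
     (\<forall>t\<ge>0. \<forall>B\<in>sets (borel :: real measure). {\<omega>\<in>\<Omega>. X (t, \<omega>) \<in> B} \<in> F t)"

definition cadlag :: "'a set \<Rightarrow> (real \<times> 'a \<Rightarrow> real) \<Rightarrow> bool" where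
  "cadlag \<Omega> X \<longleftrightarrow> (\<forall>\<omega>\<in>\<Omega>.
     (\<forall>t\<ge>0. ((\<lambda>s. X (s, \<omega>)) \<longlongrightarrow> X (t, \<omega>)) (at_right t)) \<and>
     (\<forall>t>0. \<exists>l. ((\<lambda>s. X (s, \<omega>)) \<longlongrightarrow> l) (at_left t)))"

definition left_continuous :: "'a set \<Rightarrow> (real \<times> 'a \<Rightarrow> real) \<Rightarrow> bool" where
  "left_continuous \<Omega> X \<longleftrightarrow> (\<forall>\<omega>\<in>\<Omega>.
     \<forall>t>0. ((\<lambda>s. X (s, \<omega>)) \<longlongrightarrow> X (t, \<omega>)) (at_left t))"

definition optional_measure :: "'a set \<Rightarrow> (real \<Rightarrow> 'a set set) \<Rightarrow> (real \<times> 'a) measure" where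
  "optional_measure \<Omega> F = sigma ({0..} \<times> \<Omega>)
     {{p\<in>{0..} \<times> \<Omega>. X p \<in> B} | X B. cadlag \<Omega> X \<and> adapted \<Omega> F X \<and> B \<in> sets (borel :: real measure)}"

definition predictable_measure :: "'a set \<Rightarrow> (real \<Rightarrow> 'a set set) \<Rightarrow> (real \<times> 'a) measure" where
  "predictable_measure \<Omega> F = sigma ({0..} \<times> \<Omega>)
     {{p\<in>{0..} \<times> \<Omega>. X p \<in> B} | X B. left_continuous \<Omega> X \<and> adapted \<Omega> F X \<and> B \<in> sets (borel :: real measure)}"

definition rc_filtration :: "'a measure \<Rightarrow> (real \<Rightarrow> 'a set set) \<Rightarrow> bool" where
  "rc_filtration Q F \<longleftrightarrow>
     (\<forall>t\<ge>0. sigma_algebra (space Q) (F t) \<and> F t \<subseteq> sets Q) \<and>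
     (\<forall>s t. 0 \<le> s \<longrightarrow> s \<le> t \<longrightarrow> F s \<subseteq> F t) \<and>
     (\<forall>t\<ge>0. F t = (\<Inter>s\<in>{t<..}. F s))"

definition F_infty :: "'a set \<Rightarrow> (real \<Rightarrow> 'a set set) \<Rightarrow> 'a set set" where
  "F_infty \<Omega> F = sigma_sets \<Omega> (\<Union>t\<in>{0..}. F t)"

definition null_sigma :: "'a measure \<Rightarrow> 'a set set \<Rightarrow> 'a set set" where
  "null_sigma Q T = sigma_sets (space Q) {B. \<exists>C\<in>T. C \<in> sets Q \<and> emeasure Q C = 0 \<and> B \<subseteq> C}"

definition sigma_rv :: "'a set \<Rightarrow> ('a \<Rightarrow> ereal) \<Rightarrow> 'a set set" where
  "sigma_rv \<Omega> Z = {Z -` B \<inter> \<Omega> | B. B \<in> sets (borel :: ereal measure)}"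

definition tau_Finf :: "'a measure \<Rightarrow> (real \<Rightarrow> 'a set set) \<Rightarrow> ('a \<Rightarrow> ereal) \<Rightarrow> 'a set set" where
  "tau_Finf Q F \<tau> = sigma_sets (space Q) (sigma_rv (space Q) \<tau> \<union> F_infty (space Q) F)"

text \<open>The progressively enlarged filtration G.\<close>
definition Gfilt :: "'a measure \<Rightarrow> (real \<Rightarrow> 'a set set) \<Rightarrow> ('a \<Rightarrow> ereal) \<Rightarrow> real \<Rightarrow> 'a set set" where
  "Gfilt Q F \<tau> t = sigma_sets (space Q)
     (null_sigma Q (tau_Finf Q F \<tau>) \<union>
      (\<Inter>s\<in>{t<..}. sigma_sets (space Q) (F s \<union> sigma_rv (space Q) (\<lambda>\<omega>. min (\<tau> \<omega>) (ereal s)))))"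

text \<open>Optional splitting formula for Y on A (at \<tau> w.r.t. F); identities hold outside an
  N-measurable Q-null set, i.e. outside a (sigma(\<tau>) \<or> F_\<infinity>)-measurable Q-null set.\<close>
definition optional_splitting :: "'a measure \<Rightarrow> (real \<Rightarrow> 'a set set) \<Rightarrow> ('a \<Rightarrow> ereal)
    \<Rightarrow> (real \<times> 'a \<Rightarrow> real) \<Rightarrow> (real \<times> 'a) set \<Rightarrow> bool" where
  "optional_splitting Q F \<tau> Y A \<longleftrightarrow>
     (\<exists>Y' (Y'' :: ereal \<Rightarrow> real \<times> 'a \<Rightarrow> real).
        Y' \<in> borel_measurable (optional_measure (space Q) F) \<and>
        (\<lambda>(u, p). Y'' u p) \<in> borel_measurable
            (restrict_space (borel :: ereal measure) {0..} \<Otimes>\<^sub>M optional_measure (space Q) F) \<and>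
        (\<exists>Nl \<in> tau_Finf Q F \<tau>. Nl \<in> sets Q \<and> emeasure Q Nl = 0 \<and>
           (\<forall>\<omega>\<in>space Q - Nl. \<forall>t\<ge>0.
              Y (t, \<omega>) * indicator A (t, \<omega>) =
              (Y' (t, \<omega>) * indicator {p. ereal (fst p) < \<tau> (snd p)} (t, \<omega>)
               + Y'' (\<tau> \<omega>) (t, \<omega>) * indicator {p. \<tau> (snd p) \<le> ereal (fst p)} (t, \<omega>))
              * indicator A (t, \<omega>))))"

definition Lo :: "'a measure \<Rightarrow> (real \<Rightarrow> 'a set set) \<Rightarrow> ('a \<Rightarrow> ereal) \<Rightarrow> (real \<times> 'a) set set" where
  "Lo Q F \<tau> = {A. A \<in> sets (optional_measure (space Q) (Gfilt Q F \<tau>)) \<and>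
     (\<forall>Y \<in> borel_measurable (optional_measure (space Q) (Gfilt Q F \<tau>)).
        optional_splitting Q F \<tau> Y A)}"

end

theory Submission
  imports Defs
begin

locale setting =
  fixes Q :: "'a measure" and F :: "real \<Rightarrow> 'a set set" and \<tau> :: "'a \<Rightarrow> ereal"
  assumes rc: "rc_filtration Q F" and tau_meas: "\<tau> \<in> borel_measurable Q"
    and tau_nn: "\<forall>\<omega>\<in>space Q. 0 \<le> \<tau> \<omega>"
begin

definition nullT :: "'a set set" where
  "nullT = {N. N \<in> tau_Finf Q F \<tau> \<and> N \<in> sets Q \<and> emeasure Q N = 0}"

lemma nullT_empty: "{} \<in> nullT"
  unfolding nullT_def tau_Finf_def by (auto intro: sigma_sets.Empty)

lemma nullT_UN: assumes "\<And>i::nat. N i \<in> nullT" shows "(\<Union>i. N i) \<in> nullT"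
proof -
  have "(\<Union>i. N i) \<in> tau_Finf Q F \<tau>" using assms unfolding nullT_def tau_Finf_def
    by (auto intro: sigma_sets.Union)
  moreover have "range N \<subseteq> sets Q" using assms unfolding nullT_def by auto
  moreover have "emeasure Q (\<Union>i. N i) = 0" 
    using assms unfolding nullT_def by (intro emeasure_UN_eq_0) auto
  ultimately show ?thesis unfolding nullT_def by auto
qed

lemma nullT_Un: assumes "N1 \<in> nullT" "N2 \<in> nullT" shows "N1 \<union> N2 \<in> nullT"
proof -
  have "N1 \<union> N2 = (\<Union>i. if i = (0::nat) then N1 else N2)" by (auto split: if_splits)
  also have "\<dots> \<in> nullT" using assms by (intro nullT_UN) auto
  finally show ?thesis .
qed

definition goodset :: "'b set \<Rightarrow> 'b set set \<Rightarrow> ('a \<Rightarrow> 'b) \<Rightarrow> ('a \<Rightarrow> bool) \<Rightarrow> 'a set \<Rightarrow> bool" where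
  "goodset S K g cond D \<longleftrightarrow> (\<exists>N\<in>nullT. \<exists>C\<in>K. \<forall>\<omega>\<in>space Q - N. cond \<omega> \<longrightarrow> (\<omega> \<in> D \<longleftrightarrow> g \<omega> \<in> C))"

lemma goodset_sigma:
  assumes sa: "sigma_algebra S K" and g: "\<forall>\<omega>\<in>space Q. g \<omega> \<in> S"
    and gen: "\<forall>D\<in>Gen. goodset S K g cond D"
    and D: "D \<in> sigma_sets (space Q) Gen"
  shows "goodset S K g cond D"
proof -
  interpret K: sigma_algebra S K by (rule sa)
  show ?thesis using D
proof (induction rule: sigma_sets.induct)
  case (Basic a) then show ?case using gen by auto
next
  case Empty then show ?case unfolding goodset_def
    using nullT_empty K.empty_sets by blast
next
  case (Compl a)
  then obtain N C where N: "N \<in> nullT" and C: "C \<in> K" 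
    and h: "\<forall>\<omega>\<in>space Q - N. cond \<omega> \<longrightarrow> (\<omega> \<in> a \<longleftrightarrow> g \<omega> \<in> C)"
    unfolding goodset_def by blast
  have "S - C \<in> K" using C by (rule K.compl_sets)
  moreover have "\<forall>\<omega>\<in>space Q - N. cond \<omega> \<longrightarrow> (\<omega> \<in> space Q - a \<longleftrightarrow> g \<omega> \<in> S - C)"
    using h g by auto
  ultimately show ?case using N unfolding goodset_def by blast
next
  case (Union a)
  then have "\<forall>i. \<exists>N C. N \<in> nullT \<and> C \<in> K \<and> (\<forall>\<omega>\<in>space Q - N. cond \<omega> \<longrightarrow> (\<omega> \<in> a i \<longleftrightarrow> g \<omega> \<in> C))"
    unfolding goodset_def by blast
  then obtain N C where NC: "\<And>i. N i \<in> nullT" "\<And>i. C i \<in> K"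
    "\<And>i. \<forall>\<omega>\<in>space Q - N i. cond \<omega> \<longrightarrow> (\<omega> \<in> a i \<longleftrightarrow> g \<omega> \<in> C i)"
    by metis
  have "(\<Union>i. C i) \<in> K" using NC(2) by auto
  moreover have "(\<Union>i. N i) \<in> nullT" using NC(1) by (rule nullT_UN)
  moreover have "\<forall>\<omega>\<in>space Q - (\<Union>i. N i). cond \<omega> \<longrightarrow> (\<omega> \<in> (\<Union>i. a i) \<longleftrightarrow> g \<omega> \<in> (\<Union>i. C i))"
    using NC(3) by blast
  ultimately show ?case unfolding goodset_def by blast
qed
qed

end

context setting begin

lemma F_sa: "t \<ge> 0 \<Longrightarrow> sigma_algebra (space Q) (F t)"
  using rc unfolding rc_filtration_def by blast
lemma F_mono: "0 \<le> s \<Longrightarrow> s \<le> t \<Longrightarrow> F s \<subseteq> F t"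
  using rc unfolding rc_filtration_def by blast
lemma F_rc: "t \<ge> 0 \<Longrightarrow> F t = (\<Inter>s\<in>{t<..}. F s)"
  using rc unfolding rc_filtration_def by blast
lemma F_sub: "t \<ge> 0 \<Longrightarrow> A \<in> F t \<Longrightarrow> A \<subseteq> space Q"
  proof -
  assume "t \<ge> 0" "A \<in> F t"
  then interpret S: sigma_algebra "space Q" "F t" using F_sa by auto
  show ?thesis using \<open>A \<in> F t\<close> S.sets_into_space by auto
qed

lemma limsup_in_F:
  assumes a: "a \<ge> 0" and C: "\<And>m::nat. C m \<in> F (a + 1/(real m+1))"
  shows "{\<omega>\<in>space Q. \<forall>M. \<exists>m\<ge>M. \<omega> \<in> C m} \<in> F a"
proof -
  have "{\<omega>\<in>space Q. \<forall>M. \<exists>m\<ge>M. \<omega> \<in> C m} \<in> F s" if s: "s > a" for s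
  proof -
    interpret S: sigma_algebra "space Q" "F s" using F_sa s a by auto
    obtain M0 :: nat where M0: "1 / (real M0+1) < s - a"
    proof -
      obtain n where "inverse (real (Suc n)) < s - a" using reals_Archimedean[of "s-a"] s by auto
      then show ?thesis using that[of n] by (simp add: inverse_eq_divide add.commute)
    qed
    have CM: "C m \<in> F s" if "m \<ge> M0" for m
    proof -
      have "1/(real m+1) \<le> 1/(real M0+1)" using that by (intro divide_left_mono) auto
      then have "a + 1/(real m+1) \<le> s" using M0 by linarith
      moreover have "0 \<le> a + 1/(real m+1)" using a by (simp add: add_nonneg_pos)
      ultimately show ?thesis using F_mono[of "a + 1/(real m+1)" s] C[of m] by auto
    qed
    have eq: "{\<omega>\<in>space Q. \<forall>M. \<exists>m\<ge>M. \<omega> \<in> C m} = space Q \<inter> (\<Inter>M. \<Union>m. C (m + M + M0))"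
    proof (intro set_eqI iffI)
      fix x assume "x \<in> {\<omega>\<in>space Q. \<forall>M. \<exists>m\<ge>M. \<omega> \<in> C m}"
      then have x: "x \<in> space Q" "\<And>M. \<exists>m\<ge>M. x \<in> C m" by auto
      show "x \<in> space Q \<inter> (\<Inter>M. \<Union>m. C (m + M + M0))"
      proof (safe intro!: x(1))
        fix M obtain m where "m \<ge> M + M0" "x \<in> C m" using x(2) by blast
        then show "x \<in> (\<Union>m. C (m + M + M0))"
          by (intro UN_I[of "m - (M + M0)"]) auto
      qed
    next
      fix x assume x: "x \<in> space Q \<inter> (\<Inter>M. \<Union>m. C (m + M + M0))"
      show "x \<in> {\<omega>\<in>space Q. \<forall>M. \<exists>m\<ge>M. \<omega> \<in> C m}"
      proof (safe)
        show "x \<in> space Q" using x by auto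
        fix M from x obtain m where "x \<in> C (m + M + M0)" by auto
        then show "\<exists>m\<ge>M. x \<in> C m" by (intro exI[of _ "m + M + M0"]) auto
      qed
    qed
    have "\<And>M. (\<Union>m. C (m + M + M0)) \<in> F s" using CM by (intro S.countable_UN) auto
    then have "(\<Inter>M. \<Union>m. C (m + M + M0)) \<in> F s" by (intro S.countable_INT) auto
    then show ?thesis unfolding eq by (intro S.Int S.top)
  qed
  then show ?thesis using F_rc[OF a] by blast
qed

end

context setting begin

definition Rm :: "ereal measure" where "Rm = restrict_space borel {0..}"
definition Mt :: "real \<Rightarrow> 'a measure" where "Mt t = measure_of (space Q) (F t) (\<lambda>_. 0)"

lemma space_Rm: "space Rm = {0..}" unfolding Rm_def by (simp add: space_restrict_space)
lemma sets_Mt: "t \<ge> 0 \<Longrightarrow> sets (Mt t) = F t"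
  unfolding Mt_def using F_sa by (simp add: sigma_algebra.sets_measure_of_eq)
lemma space_Mt: "t \<ge> 0 \<Longrightarrow> space (Mt t) = space Q"
  unfolding Mt_def using F_sub by (auto simp: space_measure_of_conv)

definition Iset :: "real \<Rightarrow> 'a set set" where
  "Iset a = (\<Inter>s\<in>{a<..}. sigma_sets (space Q) (F s \<union> sigma_rv (space Q) (\<lambda>\<omega>. min (\<tau> \<omega>) (ereal s))))"

lemma Gfilt_eq: "Gfilt Q F \<tau> a = sigma_sets (space Q) (null_sigma Q (tau_Finf Q F \<tau>) \<union> Iset a)"
  unfolding Gfilt_def Iset_def by simp

lemma null_good:
  assumes sa: "sigma_algebra S K" and g: "\<forall>\<omega>\<in>space Q. g \<omega> \<in> S"
    and D: "D \<in> null_sigma Q (tau_Finf Q F \<tau>)"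
  shows "goodset S K g cond D"
proof -
  interpret K: sigma_algebra S K by (rule sa)
  show ?thesis using D unfolding null_sigma_def
  proof (rule goodset_sigma[OF sa g, rotated])
    show "\<forall>D\<in>{B. \<exists>C\<in>tau_Finf Q F \<tau>. C \<in> sets Q \<and> emeasure Q C = 0 \<and> B \<subseteq> C}. goodset S K g cond D"
    proof
      fix B assume "B \<in> {B. \<exists>C\<in>tau_Finf Q F \<tau>. C \<in> sets Q \<and> emeasure Q C = 0 \<and> B \<subseteq> C}"
      then obtain C where "C \<in> nullT" "B \<subseteq> C" unfolding nullT_def by auto
      then show "goodset S K g cond B" unfolding goodset_def
        by (intro bexI[of _ C] bexI[of _ "{}"]) auto
    qed
  qed
qed

lemma combine_good:
  assumes a: "a \<ge> 0" and G: "\<And>m::nat. goodset (space Q) (F (a + 1/(real m+1))) id (cm m) D"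
    and ev: "\<And>\<omega>. \<omega> \<in> space Q \<Longrightarrow> cond \<omega> \<Longrightarrow> \<exists>M. \<forall>m\<ge>M. cm m \<omega>"
  shows "goodset (space Q) (F a) id cond D"
proof -
  have "\<forall>m. \<exists>N C. N \<in> nullT \<and> C \<in> F (a + 1/(real m+1)) \<and> (\<forall>\<omega>\<in>space Q - N. cm m \<omega> \<longrightarrow> (\<omega> \<in> D \<longleftrightarrow> \<omega> \<in> C))"
    using G unfolding goodset_def id_def by blast
  then obtain N C where NC: "\<And>m. N m \<in> nullT" "\<And>m. C m \<in> F (a + 1/(real m+1))"
    "\<And>m. \<forall>\<omega>\<in>space Q - N m. cm m \<omega> \<longrightarrow> (\<omega> \<in> D \<longleftrightarrow> \<omega> \<in> C m)" by metis
  let ?C = "{\<omega>\<in>space Q. \<forall>M. \<exists>m\<ge>M. \<omega> \<in> C m}"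
  have "?C \<in> F a" using limsup_in_F[OF a NC(2)] .
  moreover have "(\<Union>m. N m) \<in> nullT" using NC(1) by (rule nullT_UN)
  moreover have "\<forall>\<omega>\<in>space Q - (\<Union>m. N m). cond \<omega> \<longrightarrow> (\<omega> \<in> D \<longleftrightarrow> id \<omega> \<in> ?C)"
  proof (intro ballI impI)
    fix \<omega> assume \<omega>: "\<omega> \<in> space Q - (\<Union>m. N m)" and c: "cond \<omega>"
    obtain M where M: "\<forall>m\<ge>M. cm m \<omega>" using ev[of \<omega>] c \<omega> by blast
    have eq: "\<And>m. m \<ge> M \<Longrightarrow> (\<omega> \<in> D \<longleftrightarrow> \<omega> \<in> C m)" using NC(3) M \<omega> by blast
    show "\<omega> \<in> D \<longleftrightarrow> id \<omega> \<in> ?C"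
    proof
      assume "\<omega> \<in> D"
      then have "\<forall>M'. \<exists>m\<ge>M'. \<omega> \<in> C m" using eq by (metis max.cobounded1 max.cobounded2)
      then show "id \<omega> \<in> ?C" using \<omega> by auto
    next
      assume "id \<omega> \<in> ?C" then obtain m where "m \<ge> M" "\<omega> \<in> C m" by auto
      then show "\<omega> \<in> D" using eq by blast
    qed
  qed
  ultimately show ?thesis unfolding goodset_def by blast
qed

end

context setting begin

lemma sigma_rvE: assumes "E \<in> sigma_rv (space Q) Z"
  obtains B where "B \<in> sets (borel :: ereal measure)" "E = Z -` B \<inter> space Q"
  using assms unfolding sigma_rv_def by auto

lemma good_const:
  assumes sa: "sigma_algebra (space Q) K"
    and h: "\<And>\<omega>. \<omega> \<in> space Q \<Longrightarrow> cond \<omega> \<Longrightarrow> (\<omega> \<in> E \<longleftrightarrow> P)"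
  shows "goodset (space Q) K id cond E"
proof -
  interpret K: sigma_algebra "space Q" K by (rule sa)
  have "(if P then space Q else {}) \<in> K" by auto
  moreover have "\<forall>\<omega>\<in>space Q - {}. cond \<omega> \<longrightarrow> (\<omega> \<in> E \<longleftrightarrow> id \<omega> \<in> (if P then space Q else {}))"
    using h by auto
  ultimately show ?thesis unfolding goodset_def using nullT_empty by blast
qed

lemma good_self:
  assumes "E \<in> K" shows "goodset S K id cond E"
  unfolding goodset_def using nullT_empty assms by force

lemma good_D1:
  assumes a: "a \<ge> 0" and D: "D \<in> Gfilt Q F \<tau> a"
  shows "goodset (space Q) (F a) id (\<lambda>\<omega>. ereal a < \<tau> \<omega>) D"
proof -
  have saF: "sigma_algebra (space Q) (F a)" using F_sa a by auto
  have gen: "\<forall>E\<in>null_sigma Q (tau_Finf Q F \<tau>) \<union> Iset a. goodset (space Q) (F a) id (\<lambda>\<omega>. ereal a < \<tau> \<omega>) E"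
  proof
    fix E assume "E \<in> null_sigma Q (tau_Finf Q F \<tau>) \<union> Iset a"
    then show "goodset (space Q) (F a) id (\<lambda>\<omega>. ereal a < \<tau> \<omega>) E"
    proof
      assume "E \<in> null_sigma Q (tau_Finf Q F \<tau>)"
      from null_good[OF saF _ this] show ?thesis by simp
    next
      assume E: "E \<in> Iset a"
      show ?thesis
      proof (rule combine_good[OF a, of "\<lambda>m \<omega>. ereal (a + 1/(real m+1)) \<le> \<tau> \<omega>"])
        fix m :: nat
        define s where "s = a + 1/(real m+1)"
        have s: "s > a" unfolding s_def by (simp add: add_pos_pos)
        then have s0: "s \<ge> 0" using a by simp
        have Es: "E \<in> sigma_sets (space Q) (F s \<union> sigma_rv (space Q) (\<lambda>\<omega>. min (\<tau> \<omega>) (ereal s)))"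
          using E s unfolding Iset_def by blast
        have saS: "sigma_algebra (space Q) (F s)" using F_sa s0 by auto
        have "goodset (space Q) (F s) id (\<lambda>\<omega>. ereal s \<le> \<tau> \<omega>) E"
        proof (rule goodset_sigma[OF saS _ _ Es])
          show "\<forall>\<omega>\<in>space Q. id \<omega> \<in> space Q" by simp
          show "\<forall>D\<in>F s \<union> sigma_rv (space Q) (\<lambda>\<omega>. min (\<tau> \<omega>) (ereal s)). goodset (space Q) (F s) id (\<lambda>\<omega>. ereal s \<le> \<tau> \<omega>) D"
          proof
            fix D assume "D \<in> F s \<union> sigma_rv (space Q) (\<lambda>\<omega>. min (\<tau> \<omega>) (ereal s))"
            then show "goodset (space Q) (F s) id (\<lambda>\<omega>. ereal s \<le> \<tau> \<omega>) D"
            proof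
              assume "D \<in> F s" then show ?thesis by (rule good_self)
            next
              assume "D \<in> sigma_rv (space Q) (\<lambda>\<omega>. min (\<tau> \<omega>) (ereal s))"
              then obtain B where B: "D = (\<lambda>\<omega>. min (\<tau> \<omega>) (ereal s)) -` B \<inter> space Q"
                by (rule sigma_rvE)
              show ?thesis
                by (rule good_const[OF saS, of _ _ "ereal s \<in> B"]) (auto simp: B min_def)
            qed
          qed
        qed
        then show "goodset (space Q) (F (a + 1 / (real m + 1))) id (\<lambda>\<omega>. ereal (a + 1 / (real m + 1)) \<le> \<tau> \<omega>) E"
          unfolding s_def .
      next
        fix \<omega> assume "\<omega> \<in> space Q" "ereal a < \<tau> \<omega>"
        then show "\<exists>M. \<forall>m\<ge>M. ereal (a + 1 / (real m + 1)) \<le> \<tau> \<omega>"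
        proof (cases "\<tau> \<omega>")
          case (real r)
          with \<open>ereal a < \<tau> \<omega>\<close> have "r - a > 0" by simp
          then obtain n where n: "inverse (real (Suc n)) < r - a" using reals_Archimedean by blast
          show ?thesis
          proof (intro exI allI impI)
            fix m assume "n \<le> m"
            then have "1/(real m+1) \<le> 1/(real n+1)" by (intro divide_left_mono) auto
            then show "ereal (a + 1 / (real m + 1)) \<le> \<tau> \<omega>" using n real
              by (simp add: inverse_eq_divide add.commute)
          qed
        qed auto
      qed
    qed
  qed
  show ?thesis by (rule goodset_sigma[OF saF _ gen D[unfolded Gfilt_eq]]) simp
qed

lemma good_D3:
  assumes D: "D \<in> Gfilt Q F \<tau> 0"
  shows "goodset (space Q) (F 0) id (\<lambda>\<omega>. \<tau> \<omega> \<le> 0) D"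
proof -
  have saF: "sigma_algebra (space Q) (F 0)" using F_sa by auto
  have gen: "\<forall>E\<in>null_sigma Q (tau_Finf Q F \<tau>) \<union> Iset 0. goodset (space Q) (F 0) id (\<lambda>\<omega>. \<tau> \<omega> \<le> 0) E"
  proof
    fix E assume "E \<in> null_sigma Q (tau_Finf Q F \<tau>) \<union> Iset 0"
    then show "goodset (space Q) (F 0) id (\<lambda>\<omega>. \<tau> \<omega> \<le> 0) E"
    proof
      assume "E \<in> null_sigma Q (tau_Finf Q F \<tau>)"
      from null_good[OF saF _ this] show ?thesis by simp
    next
      assume E: "E \<in> Iset 0"
      show ?thesis
      proof (rule combine_good[of 0 "\<lambda>m \<omega>. \<tau> \<omega> \<le> 0"])
        fix m :: nat
        define s where "s = 0 + 1/(real m+1)"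
        have s: "s > 0" unfolding s_def by simp
        have Es: "E \<in> sigma_sets (space Q) (F s \<union> sigma_rv (space Q) (\<lambda>\<omega>. min (\<tau> \<omega>) (ereal s)))"
          using E s unfolding Iset_def by blast
        have saS: "sigma_algebra (space Q) (F s)" using F_sa s by auto
        have "goodset (space Q) (F s) id (\<lambda>\<omega>. \<tau> \<omega> \<le> 0) E"
        proof (rule goodset_sigma[OF saS _ _ Es])
          show "\<forall>\<omega>\<in>space Q. id \<omega> \<in> space Q" by simp
          show "\<forall>D\<in>F s \<union> sigma_rv (space Q) (\<lambda>\<omega>. min (\<tau> \<omega>) (ereal s)). goodset (space Q) (F s) id (\<lambda>\<omega>. \<tau> \<omega> \<le> 0) D"
          proof
            fix D assume "D \<in> F s \<union> sigma_rv (space Q) (\<lambda>\<omega>. min (\<tau> \<omega>) (ereal s))"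
            then show "goodset (space Q) (F s) id (\<lambda>\<omega>. \<tau> \<omega> \<le> 0) D"
            proof
              assume "D \<in> F s" then show ?thesis by (rule good_self)
            next
              assume "D \<in> sigma_rv (space Q) (\<lambda>\<omega>. min (\<tau> \<omega>) (ereal s))"
              then obtain B where B: "D = (\<lambda>\<omega>. min (\<tau> \<omega>) (ereal s)) -` B \<inter> space Q"
                by (rule sigma_rvE)
              show ?thesis
              proof (rule good_const[OF saS, of _ _ "0 \<in> B"])
                fix \<omega> assume \<omega>: "\<omega> \<in> space Q" "\<tau> \<omega> \<le> 0"
                then have "\<tau> \<omega> = 0" using tau_nn by (simp add: antisym)
                then have "min (\<tau> \<omega>) (ereal s) = 0" using s by (simp add: min_def)
                then show "\<omega> \<in> D \<longleftrightarrow> 0 \<in> B" using \<omega> B by auto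
              qed
            qed
          qed
        qed
        then show "goodset (space Q) (F (0 + 1 / (real m + 1))) id (\<lambda>\<omega>. \<tau> \<omega> \<le> 0) E"
          unfolding s_def .
      qed auto
    qed
  qed
  show ?thesis by (rule goodset_sigma[OF saF _ gen D[unfolded Gfilt_eq]]) simp
qed

end

context setting begin

lemma good_D2:
  assumes a: "a \<ge> 0" and s: "s > a" and D: "D \<in> Gfilt Q F \<tau> a"
  shows "goodset (space (Rm \<Otimes>\<^sub>M Mt s)) (sets (Rm \<Otimes>\<^sub>M Mt s)) (\<lambda>\<omega>. (\<tau> \<omega>, \<omega>)) (\<lambda>\<omega>. \<tau> \<omega> \<le> ereal a) D"
proof -
  have s0: "s \<ge> 0" using a s by simp
  let ?P = "Rm \<Otimes>\<^sub>M Mt s"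
  have sa: "sigma_algebra (space ?P) (sets ?P)" by (rule sets.sigma_algebra_axioms)
  have g: "\<forall>\<omega>\<in>space Q. (\<tau> \<omega>, \<omega>) \<in> space ?P"
    using tau_nn by (simp add: space_pair_measure space_Rm space_Mt[OF s0])
  have gen: "\<forall>E\<in>null_sigma Q (tau_Finf Q F \<tau>) \<union> Iset a. goodset (space ?P) (sets ?P) (\<lambda>\<omega>. (\<tau> \<omega>, \<omega>)) (\<lambda>\<omega>. \<tau> \<omega> \<le> ereal a) E"
  proof
    fix E assume "E \<in> null_sigma Q (tau_Finf Q F \<tau>) \<union> Iset a"
    then show "goodset (space ?P) (sets ?P) (\<lambda>\<omega>. (\<tau> \<omega>, \<omega>)) (\<lambda>\<omega>. \<tau> \<omega> \<le> ereal a) E"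
    proof
      assume "E \<in> null_sigma Q (tau_Finf Q F \<tau>)"
      from null_good[OF sa g this] show ?thesis .
    next
      assume E: "E \<in> Iset a"
      have Es: "E \<in> sigma_sets (space Q) (F s \<union> sigma_rv (space Q) (\<lambda>\<omega>. min (\<tau> \<omega>) (ereal s)))"
        using E s unfolding Iset_def by blast
      show ?thesis
      proof (rule goodset_sigma[OF sa g _ Es], intro ballI)
        fix D assume "D \<in> F s \<union> sigma_rv (space Q) (\<lambda>\<omega>. min (\<tau> \<omega>) (ereal s))"
        then show "goodset (space ?P) (sets ?P) (\<lambda>\<omega>. (\<tau> \<omega>, \<omega>)) (\<lambda>\<omega>. \<tau> \<omega> \<le> ereal a) D"
        proof
          assume Ds: "D \<in> F s"
          have "{0..} \<times> D \<in> sets ?P"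
            using Ds by (intro pair_measureI) (auto simp: sets_Mt[OF s0] space_Rm[symmetric])
          moreover have "\<forall>\<omega>\<in>space Q - {}. \<tau> \<omega> \<le> ereal a \<longrightarrow> (\<omega> \<in> D \<longleftrightarrow> (\<tau> \<omega>, \<omega>) \<in> {0..} \<times> D)"
            using tau_nn by auto
          ultimately show ?thesis unfolding goodset_def using nullT_empty by blast
        next
          assume "D \<in> sigma_rv (space Q) (\<lambda>\<omega>. min (\<tau> \<omega>) (ereal s))"
          then obtain B where B: "B \<in> sets borel" "D = (\<lambda>\<omega>. min (\<tau> \<omega>) (ereal s)) -` B \<inter> space Q"
            by (rule sigma_rvE)
          have "{0..} \<inter> B \<in> sets Rm" using B(1) unfolding Rm_def sets_restrict_space by auto
          moreover have "space Q \<in> sets (Mt s)" using sets.top[of "Mt s"] space_Mt[OF s0] by simp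
          ultimately have "({0..} \<inter> B) \<times> space Q \<in> sets ?P" by (intro pair_measureI)
          moreover have "\<forall>\<omega>\<in>space Q - {}. \<tau> \<omega> \<le> ereal a \<longrightarrow> (\<omega> \<in> D \<longleftrightarrow> (\<tau> \<omega>, \<omega>) \<in> ({0..} \<inter> B) \<times> space Q)"
          proof (intro ballI impI)
            fix \<omega> assume \<omega>: "\<omega> \<in> space Q - {}" "\<tau> \<omega> \<le> ereal a"
            have "\<tau> \<omega> \<le> ereal s" using \<omega>(2) s by (meson ereal_less_eq(3) less_imp_le order_trans)
            then have "min (\<tau> \<omega>) (ereal s) = \<tau> \<omega>" by (simp add: min_def)
            then show "\<omega> \<in> D \<longleftrightarrow> (\<tau> \<omega>, \<omega>) \<in> ({0..} \<inter> B) \<times> space Q" using \<omega> tau_nn B(2) by auto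
          qed
          ultimately show ?thesis unfolding goodset_def using nullT_empty by blast
        qed
      qed
    qed
  qed
  show ?thesis by (rule goodset_sigma[OF sa g gen D[unfolded Gfilt_eq]])
qed

end

context setting begin

abbreviation "Om \<equiv> optional_measure (space Q) F"

definition OGen :: "(real \<times> 'a) set set" where
  "OGen = {{p\<in>{0..} \<times> space Q. X p \<in> B} | X B. cadlag (space Q) X \<and> adapted (space Q) F X \<and> B \<in> sets (borel :: real measure)}"

lemma OGen_Pow: "OGen \<subseteq> Pow ({0..} \<times> space Q)" unfolding OGen_def by auto

lemma sets_Om: "sets Om = sigma_sets ({0..} \<times> space Q) OGen"
  unfolding optional_measure_def OGen_def[symmetric] using OGen_Pow by (simp add: sets_measure_of)
lemma space_Om: "space Om = {0..} \<times> space Q"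
  unfolding optional_measure_def OGen_def[symmetric] using OGen_Pow by (simp add: space_measure_of_conv)

lemma arch: "(x::real) > 0 \<Longrightarrow> \<exists>m::nat. 1/(real m+1) < x"
proof -
  assume "x > 0"
  then obtain n where "inverse (real (Suc n)) < x" using reals_Archimedean by blast
  then show ?thesis by (intro exI[of _ n]) (simp add: inverse_eq_divide add.commute)
qed

lemma right_ev: "eventually (\<lambda>s. (s \<in> {\<alpha>..<\<beta>}) = (t \<in> {\<alpha>..<\<beta>})) (at_right (t::real))"
proof -
  consider "t < \<alpha>" | "\<alpha> \<le> t" "t < \<beta>" | "t \<ge> \<beta>" by linarith
  then show ?thesis
  proof cases
    case 1 then show ?thesis by (intro eventually_mono[OF eventually_at_right_real[OF 1]]) auto
  next
    case 2 then show ?thesis by (intro eventually_mono[OF eventually_at_right_real[OF 2(2)]]) auto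
  next
    case 3 then show ?thesis
      by (intro eventually_mono[OF eventually_at_right_real[of t "t+1"]]) auto
  qed
qed

lemma left_ev: "\<exists>c. eventually (\<lambda>s. (s \<in> {\<alpha>..<\<beta>}) = c) (at_left (t::real))"
proof -
  consider "t \<le> \<alpha>" | "\<alpha> < t" "t \<le> \<beta>" | "t > \<beta>" by linarith
  then show ?thesis
  proof cases
    case 1 then show ?thesis
      by (intro exI[of _ False] eventually_mono[OF eventually_at_left_real[of "t-1" t]]) auto
  next
    case 2 then show ?thesis
      by (intro exI[of _ True] eventually_mono[OF eventually_at_left_real[OF 2(1)]]) auto
  next
    case 3 then show ?thesis
      by (intro exI[of _ False] eventually_mono[OF eventually_at_left_real[OF 3]]) auto
  qed
qed

lemma in_Om: "cadlag (space Q) X \<Longrightarrow> adapted (space Q) F X \<Longrightarrow> B \<in> sets borel \<Longrightarrow>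
  {p\<in>{0..} \<times> space Q. X p \<in> B} \<in> sets Om"
  unfolding sets_Om by (rule sigma_sets.Basic) (auto simp: OGen_def)

lemma rect_Om:
  assumes \<alpha>: "\<alpha> \<ge> 0" and B: "B \<in> F \<alpha>"
  shows "{\<alpha>..<\<beta>} \<times> B \<in> sets Om"
proof -
  have BO: "B \<subseteq> space Q" using F_sub[OF \<alpha> B] .
  define X where "X = (\<lambda>p::real \<times> 'a. indicator ({\<alpha>..<\<beta>} \<times> B) p :: real)"
  have X: "X (t, \<omega>) = (if t \<in> {\<alpha>..<\<beta>} \<and> \<omega> \<in> B then 1 else 0)" for t \<omega>
    unfolding X_def by (auto simp: indicator_def)
  have cad: "cadlag (space Q) X"
    unfolding cadlag_def
  proof (intro ballI conjI allI impI)
    fix \<omega> t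
    show "((\<lambda>s. X (s, \<omega>)) \<longlongrightarrow> X (t, \<omega>)) (at_right t)"
      by (rule tendsto_eventually, rule eventually_mono[OF right_ev[of \<alpha> \<beta> t]]) (simp add: X)
    obtain c where c: "eventually (\<lambda>s. (s \<in> {\<alpha>..<\<beta>}) = c) (at_left t)" using left_ev by blast
    show "\<exists>l. ((\<lambda>s. X (s, \<omega>)) \<longlongrightarrow> l) (at_left t)"
      by (rule exI, rule tendsto_eventually, rule eventually_mono[OF c]) (simp add: X)
  qed
  have ad: "adapted (space Q) F X"
    unfolding adapted_def
  proof (intro allI impI ballI)
    fix t :: real and C :: "real set" assume t: "t \<ge> 0" and C: "C \<in> sets borel"
    interpret S: sigma_algebra "space Q" "F t" using F_sa t by auto
    show "{\<omega> \<in> space Q. X (t, \<omega>) \<in> C} \<in> F t"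
    proof (cases "t \<in> {\<alpha>..<\<beta>}")
      case True
      then have BF: "B \<in> F t" using F_mono[OF \<alpha>, of t] B by auto
      have "{\<omega> \<in> space Q. X (t, \<omega>) \<in> C} = (if 1 \<in> C then B else {}) \<union> (if 0 \<in> C then space Q - B else {})"
        using True BO by (auto simp: X)
      then show ?thesis using BF by auto
    next
      case False
      have "{\<omega> \<in> space Q. X (t, \<omega>) \<in> C} = (if 0 \<in> C then space Q else {})"
        using False by (auto simp: X)
      then show ?thesis by auto
    qed
  qed
  have "{p\<in>{0..} \<times> space Q. X p \<in> {1}} \<in> sets Om" by (rule in_Om[OF cad ad]) simp
  also have "{p\<in>{0..} \<times> space Q. X p \<in> {1}} = {\<alpha>..<\<beta>} \<times> B"
    using BO \<alpha> by (auto simp: X split: if_splits)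
  finally show ?thesis .
qed

lemma rect_Om2:
  assumes c: "c \<ge> 0" and B: "B \<in> F c"
  shows "{c<..d} \<times> B \<in> sets Om"
proof -
  have "{c<..d} \<times> B = (\<Union>m::nat. \<Inter>k::nat. {c + 1/(real m+1)..<d + 1/(real k+1)} \<times> B)"
  proof (intro set_eqI iffI)
    fix x assume "x \<in> {c<..d} \<times> B"
    then obtain t \<omega> where x: "x = (t, \<omega>)" "c < t" "t \<le> d" "\<omega> \<in> B" by auto
    obtain m where m: "1/(real m+1) < t - c" using arch[of "t-c"] x(2) by auto
    have "x \<in> {c + 1/(real m+1)..<d + 1/(real k+1)} \<times> B" for k
    proof -
      have "0 < 1/(real k+1)" by simp
      then have "t < d + 1/(real k+1)" using x(3) by linarith
      then show ?thesis using x m by auto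
    qed
    then show "x \<in> (\<Union>m::nat. \<Inter>k::nat. {c + 1/(real m+1)..<d + 1/(real k+1)} \<times> B)" by blast
  next
    fix x assume "x \<in> (\<Union>m::nat. \<Inter>k::nat. {c + 1/(real m+1)..<d + 1/(real k+1)} \<times> B)"
    then obtain m where m: "\<And>k::nat. x \<in> {c + 1/(real m+1)..<d + 1/(real k+1)} \<times> B" by blast
    obtain t \<omega> where x: "x = (t, \<omega>)" by force
    have "\<omega> \<in> B" "c + 1/(real m+1) \<le> t" using m[of 0] x by auto
    moreover have "0 < 1/(real m+1)" by simp
    moreover have "t \<le> d"
    proof (rule ccontr)
      assume "\<not> t \<le> d"
      then obtain k where "1/(real k+1) < t - d" using arch[of "t-d"] by auto
      moreover have "t < d + 1/(real k+1)" using m[of k] x by auto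
      ultimately show False by simp
    qed
    ultimately have "c < t" "t \<le> d" "\<omega> \<in> B" by linarith+
    then show "x \<in> {c<..d} \<times> B" using x by simp
  qed
  also have "\<dots> \<in> sets Om"
  proof (intro sets.countable_UN sets.countable_INT image_subsetI)
    fix m k :: nat
    have "c + 1/(real m+1) \<ge> 0" using c by (simp add: add_nonneg_pos)
    moreover have "B \<in> F (c + 1/(real m+1))" using F_mono[OF c, of "c + 1/(real m+1)"] B by auto
    ultimately show "{c + 1/(real m+1)..<d + 1/(real k+1)} \<times> B \<in> sets Om" by (rule rect_Om)
  qed auto
  finally show ?thesis .
qed

lemma rect_Om0:
  assumes B: "B \<in> F 0"
  shows "{0} \<times> B \<in> sets Om"
proof -
  have "{0} \<times> B = (\<Inter>k::nat. {0..<1/(real k+1)} \<times> B)"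
  proof (intro set_eqI iffI)
    fix x assume "x \<in> (\<Inter>k::nat. {0..<1/(real k+1)} \<times> B)"
    then have m: "\<And>k::nat. x \<in> {0..<1/(real k+1)} \<times> B" by blast
    obtain t \<omega> where x: "x = (t, \<omega>)" by force
    have "\<omega> \<in> B" "0 \<le> t" using m[of 0] x by auto
    moreover have "t \<le> 0"
    proof (rule ccontr)
      assume "\<not> t \<le> 0"
      then obtain k where "1/(real k+1) < t" using arch[of t] by auto
      moreover have "t < 1/(real k+1)" using m[of k] x by auto
      ultimately show False by simp
    qed
    ultimately show "x \<in> {0} \<times> B" using x by auto
  qed auto
  also have "\<dots> \<in> sets Om"
    using B by (intro sets.countable_INT image_subsetI rect_Om) auto
  finally show ?thesis .
qed

end

context setting begin

abbreviation "Om2 \<equiv> Rm \<Otimes>\<^sub>M Om"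

lemma space_Om2: "space Om2 = {0..} \<times> ({0..} \<times> space Q)"
  by (simp add: space_pair_measure space_Rm space_Om)

lemma strip_Om2:
  assumes c: "c \<ge> 0" and W: "W \<in> sets (Rm \<Otimes>\<^sub>M Mt c)"
  shows "{x \<in> space Om2. (fst x, snd (snd x)) \<in> W \<and> c < fst (snd x) \<and> fst (snd x) \<le> d} \<in> sets Om2"
proof -
  define E where "E W = {x \<in> space Om2. (fst x, snd (snd x)) \<in> W \<and> c < fst (snd x) \<and> fst (snd x) \<le> d}" for W
  have basic: "E (A \<times> B) \<in> sets Om2" if A: "A \<in> sets Rm" and B: "B \<in> F c" for A B
  proof -
    have "A \<subseteq> {0..}" using sets.sets_into_space[OF A] space_Rm by auto
    moreover have "B \<subseteq> space Q" using F_sub[OF c B] .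
    ultimately have "E (A \<times> B) = A \<times> ({c<..d} \<times> B)" unfolding E_def space_Om2 using c by auto
    also have "\<dots> \<in> sets Om2" using A rect_Om2[OF c B] by (intro pair_measureI)
    finally show ?thesis .
  qed
  have "W \<in> sigma_sets (space Rm \<times> space (Mt c)) {a \<times> b |a b. a \<in> sets Rm \<and> b \<in> sets (Mt c)}"
    using W by (simp add: sets_pair_measure)
  then have "E W \<in> sets Om2"
  proof (induction rule: sigma_sets.induct)
    case (Basic a) then show ?case using basic sets_Mt[OF c] by auto
  next
    case Empty then show ?case by (simp add: E_def)
  next
    case (Compl a)
    have "E (space Rm \<times> space (Mt c) - a) = E (space Rm \<times> space (Mt c)) - E a"
      unfolding E_def space_Om2 space_Rm space_Mt[OF c] by auto
    moreover have "E (space Rm \<times> space (Mt c)) \<in> sets Om2"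
      using basic[of "space Rm" "space Q"] space_Mt[OF c] sigma_algebra.sets_measure_of_eq F_sa[OF c]
      by (metis sets.top sets_Mt[OF c])
    ultimately show ?case using Compl by auto
  next
    case (Union a)
    have "E (\<Union>i. a i) = (\<Union>i. E (a i))" unfolding E_def by auto
    then show ?case using Union by auto
  qed
  then show ?thesis unfolding E_def .
qed

end

context setting begin

definition gsplit :: "(real \<times> 'a \<Rightarrow> real) \<Rightarrow> bool" where
  "gsplit X \<longleftrightarrow> (\<exists>Y' Y''. Y' \<in> borel_measurable Om \<and>
     (\<lambda>z. Y'' (fst z) (snd z)) \<in> borel_measurable Om2 \<and>
     (\<exists>N\<in>nullT. \<forall>\<omega>\<in>space Q - N. \<forall>t\<ge>0.
        X (t, \<omega>) = (if ereal t < \<tau> \<omega> then Y' (t, \<omega>) else Y'' (\<tau> \<omega>) (t, \<omega>))))"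

lemma gsplitI:
  assumes "Y' \<in> borel_measurable Om" "(\<lambda>z. Y'' (fst z) (snd z)) \<in> borel_measurable Om2"
    "N \<in> nullT" "\<And>\<omega> t. \<omega> \<in> space Q - N \<Longrightarrow> t \<ge> 0 \<Longrightarrow>
        X (t, \<omega>) = (if ereal t < \<tau> \<omega> then Y' (t, \<omega>) else Y'' (\<tau> \<omega>) (t, \<omega>))"
  shows "gsplit X"
  unfolding gsplit_def using assms by blast

lemma gsplitE:
  assumes "gsplit X"
  obtains Y' Y'' N where "Y' \<in> borel_measurable Om" "(\<lambda>z. Y'' (fst z) (snd z)) \<in> borel_measurable Om2"
    "N \<in> nullT" "\<And>\<omega> t. \<omega> \<in> space Q - N \<Longrightarrow> t \<ge> 0 \<Longrightarrow>
        X (t, \<omega>) = (if ereal t < \<tau> \<omega> then Y' (t, \<omega>) else Y'' (\<tau> \<omega>) (t, \<omega>))"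
  using assms unfolding gsplit_def by blast

lemma gsplit_cong:
  assumes "gsplit X" "\<And>t \<omega>. t \<ge> 0 \<Longrightarrow> \<omega> \<in> space Q \<Longrightarrow> X' (t, \<omega>) = X (t, \<omega>)"
  shows "gsplit X'"
  using assms(1)
proof (rule gsplitE)
  fix Y' Y'' N assume *: "Y' \<in> borel_measurable Om" "(\<lambda>z. Y'' (fst z) (snd z)) \<in> borel_measurable Om2"
    "N \<in> nullT" "\<And>\<omega> t. \<omega> \<in> space Q - N \<Longrightarrow> t \<ge> 0 \<Longrightarrow>
        X (t, \<omega>) = (if ereal t < \<tau> \<omega> then Y' (t, \<omega>) else Y'' (\<tau> \<omega>) (t, \<omega>))"
  show ?thesis by (rule gsplitI[OF *(1,2,3)]) (use *(4) assms(2) in auto)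
qed

lemma gsplit_const: "gsplit (\<lambda>_. c)"
  by (rule gsplitI[of "\<lambda>_. c" "\<lambda>_ _. c" "{}"]) (auto simp: nullT_empty)

lemma gsplit_comp2:
  assumes X1: "gsplit X1" and X2: "gsplit X2"
    and f: "(\<lambda>x. f (fst x) (snd x)) \<in> borel_measurable (borel :: (real \<times> real) measure)"
  shows "gsplit (\<lambda>p. f (X1 p) (X2 p))"
proof -
  obtain Y1' Y1'' N1 where 1: "Y1' \<in> borel_measurable Om" "(\<lambda>z. Y1'' (fst z) (snd z)) \<in> borel_measurable Om2"
    "N1 \<in> nullT" "\<And>\<omega> t. \<omega> \<in> space Q - N1 \<Longrightarrow> t \<ge> 0 \<Longrightarrow>
        X1 (t, \<omega>) = (if ereal t < \<tau> \<omega> then Y1' (t, \<omega>) else Y1'' (\<tau> \<omega>) (t, \<omega>))"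
    using gsplitE[OF X1] by blast
  obtain Y2' Y2'' N2 where 2: "Y2' \<in> borel_measurable Om" "(\<lambda>z. Y2'' (fst z) (snd z)) \<in> borel_measurable Om2"
    "N2 \<in> nullT" "\<And>\<omega> t. \<omega> \<in> space Q - N2 \<Longrightarrow> t \<ge> 0 \<Longrightarrow>
        X2 (t, \<omega>) = (if ereal t < \<tau> \<omega> then Y2' (t, \<omega>) else Y2'' (\<tau> \<omega>) (t, \<omega>))"
    using gsplitE[OF X2] by blast
  have f': "(\<lambda>x. f (fst x) (snd x)) \<in> borel \<Otimes>\<^sub>M borel \<rightarrow>\<^sub>M (borel :: real measure)"
    using f by (simp add: borel_prod)
  show ?thesis
  proof (rule gsplitI[of "\<lambda>p. f (Y1' p) (Y2' p)" "\<lambda>u p. f (Y1'' u p) (Y2'' u p)" "N1 \<union> N2"])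
    show "(\<lambda>p. f (Y1' p) (Y2' p)) \<in> borel_measurable Om"
      using measurable_compose[OF measurable_Pair[OF 1(1) 2(1)] f'] by simp
    show "(\<lambda>z. f (Y1'' (fst z) (snd z)) (Y2'' (fst z) (snd z))) \<in> borel_measurable Om2"
      using measurable_compose[OF measurable_Pair[OF 1(2) 2(2)] f'] by simp
    show "N1 \<union> N2 \<in> nullT" using 1(3) 2(3) by (rule nullT_Un)
  qed (use 1(4) 2(4) in auto)
qed

lemma gsplit_comp:
  assumes X: "gsplit X" and f: "f \<in> borel_measurable (borel :: real measure)"
  shows "gsplit (\<lambda>p. f (X p))"
proof -
  have "(\<lambda>x. f (fst x)) \<in> borel_measurable (borel :: (real \<times> real) measure)"
    using measurable_compose[OF measurable_fst f] by (simp add: borel_prod[symmetric])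
  then show ?thesis using gsplit_comp2[OF X X, of "\<lambda>x y. f x"] by simp
qed

lemma gsplit_add: "gsplit X \<Longrightarrow> gsplit Z \<Longrightarrow> gsplit (\<lambda>p. X p + Z p)"
  by (rule gsplit_comp2[of X Z "\<lambda>x y. x + y"]) (unfold borel_prod[symmetric], measurable)
lemma gsplit_diff: "gsplit X \<Longrightarrow> gsplit Z \<Longrightarrow> gsplit (\<lambda>p. X p - Z p)"
  by (rule gsplit_comp2[of X Z "\<lambda>x y. x - y"]) (unfold borel_prod[symmetric], measurable)
lemma gsplit_mult: "gsplit X \<Longrightarrow> gsplit Z \<Longrightarrow> gsplit (\<lambda>p. X p * Z p)"
  by (rule gsplit_comp2[of X Z "\<lambda>x y. x * y"]) (unfold borel_prod[symmetric], measurable)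
lemma gsplit_max: "gsplit X \<Longrightarrow> gsplit Z \<Longrightarrow> gsplit (\<lambda>p. max (X p) (Z p))"
  by (rule gsplit_comp2[of X Z "\<lambda>x y. max x y"]) (unfold borel_prod[symmetric], measurable)
lemma gsplit_cmult: "gsplit X \<Longrightarrow> gsplit (\<lambda>p. c * X p)"
  by (rule gsplit_comp) auto

lemma gsplit_sum:
  assumes "finite I" "\<And>i. i \<in> I \<Longrightarrow> gsplit (X i)"
  shows "gsplit (\<lambda>p. \<Sum>i\<in>I. X i p)"
  using assms
proof (induction rule: finite_induct)
  case empty then show ?case using gsplit_const[of 0] by simp
next
  case (insert x F) then show ?case by (simp add: gsplit_add)
qed

lemma gsplit_lim:
  assumes X: "\<And>n::nat. gsplit (X n)"
    and lim: "\<And>t \<omega>. t \<ge> 0 \<Longrightarrow> \<omega> \<in> space Q \<Longrightarrow> (\<lambda>n. X n (t, \<omega>)) \<longlonglongrightarrow> X0 (t, \<omega>)"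
  shows "gsplit X0"
proof -
  have "\<forall>n. \<exists>Y' Y'' N. Y' \<in> borel_measurable Om \<and> (\<lambda>z. Y'' (fst z) (snd z)) \<in> borel_measurable Om2 \<and>
     N \<in> nullT \<and> (\<forall>\<omega>\<in>space Q - N. \<forall>t\<ge>0.
        X n (t, \<omega>) = (if ereal t < \<tau> \<omega> then Y' (t, \<omega>) else Y'' (\<tau> \<omega>) (t, \<omega>)))"
    using X unfolding gsplit_def by blast
  from choice[OF this] obtain Y' where "\<forall>n. \<exists>Y'' N. Y' n \<in> borel_measurable Om \<and> (\<lambda>z. Y'' (fst z) (snd z)) \<in> borel_measurable Om2 \<and>
     N \<in> nullT \<and> (\<forall>\<omega>\<in>space Q - N. \<forall>t\<ge>0.
        X n (t, \<omega>) = (if ereal t < \<tau> \<omega> then Y' n (t, \<omega>) else Y'' (\<tau> \<omega>) (t, \<omega>)))" by blast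
  from choice[OF this] obtain Y'' where "\<forall>n. \<exists>N. Y' n \<in> borel_measurable Om \<and> (\<lambda>z. Y'' n (fst z) (snd z)) \<in> borel_measurable Om2 \<and>
     N \<in> nullT \<and> (\<forall>\<omega>\<in>space Q - N. \<forall>t\<ge>0.
        X n (t, \<omega>) = (if ereal t < \<tau> \<omega> then Y' n (t, \<omega>) else Y'' n (\<tau> \<omega>) (t, \<omega>)))" by blast
  from choice[OF this] obtain N where YN0: "\<forall>n. Y' n \<in> borel_measurable Om \<and> (\<lambda>z. Y'' n (fst z) (snd z)) \<in> borel_measurable Om2 \<and>
     N n \<in> nullT \<and> (\<forall>\<omega>\<in>space Q - N n. \<forall>t\<ge>0.
        X n (t, \<omega>) = (if ereal t < \<tau> \<omega> then Y' n (t, \<omega>) else Y'' n (\<tau> \<omega>) (t, \<omega>)))" by blast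
  have YN: "\<And>n. Y' n \<in> borel_measurable Om"
    "\<And>n. (\<lambda>z. Y'' n (fst z) (snd z)) \<in> borel_measurable Om2" "\<And>n. N n \<in> nullT"
    "\<And>n. \<forall>\<omega>\<in>space Q - N n. \<forall>t\<ge>0.
        X n (t, \<omega>) = (if ereal t < \<tau> \<omega> then Y' n (t, \<omega>) else Y'' n (\<tau> \<omega>) (t, \<omega>))"
    using YN0 by blast+
  show ?thesis
  proof (rule gsplitI[of "\<lambda>p. real_of_ereal (limsup (\<lambda>n. ereal (Y' n p)))"
        "\<lambda>u p. real_of_ereal (limsup (\<lambda>n. ereal (Y'' n u p)))" "\<Union>n. N n"])
    show "(\<lambda>p. real_of_ereal (limsup (\<lambda>n. ereal (Y' n p)))) \<in> borel_measurable Om"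
      using YN(1) by (intro borel_measurable_real_of_ereal borel_measurable_limsup borel_measurable_ereal)
    show "(\<lambda>z. real_of_ereal (limsup (\<lambda>n. ereal (Y'' n (fst z) (snd z))))) \<in> borel_measurable Om2"
      using YN(2) by (intro borel_measurable_real_of_ereal borel_measurable_limsup borel_measurable_ereal)
    show "(\<Union>n. N n) \<in> nullT" using YN(3) by (rule nullT_UN)
  next
    fix \<omega> t assume \<omega>: "\<omega> \<in> space Q - (\<Union>n. N n)" and t: "t \<ge> (0::real)"
    have L: "(\<lambda>n. ereal (X n (t, \<omega>))) \<longlonglongrightarrow> ereal (X0 (t, \<omega>))"
      using lim[OF t] \<omega> by (simp add: lim_ereal)
    have eq: "X n (t, \<omega>) = (if ereal t < \<tau> \<omega> then Y' n (t, \<omega>) else Y'' n (\<tau> \<omega>) (t, \<omega>))" for n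
      using YN(4)[of n] \<omega> t by blast
    show "X0 (t, \<omega>) = (if ereal t < \<tau> \<omega> then real_of_ereal (limsup (\<lambda>n. ereal (Y' n (t, \<omega>))))
        else real_of_ereal (limsup (\<lambda>n. ereal (Y'' n (\<tau> \<omega>) (t, \<omega>)))))"
    proof (cases "ereal t < \<tau> \<omega>")
      case True
      then have "(\<lambda>n. ereal (Y' n (t, \<omega>))) = (\<lambda>n. ereal (X n (t, \<omega>)))" using eq by simp
      then have "limsup (\<lambda>n. ereal (Y' n (t, \<omega>))) = ereal (X0 (t, \<omega>))"
        using L lim_imp_Limsup[OF trivial_limit_sequentially] by metis
      then show ?thesis using True by simp
    next
      case False
      then have "(\<lambda>n. ereal (Y'' n (\<tau> \<omega>) (t, \<omega>))) = (\<lambda>n. ereal (X n (t, \<omega>)))" using eq by simp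
      then have "limsup (\<lambda>n. ereal (Y'' n (\<tau> \<omega>) (t, \<omega>))) = ereal (X0 (t, \<omega>))"
        using L lim_imp_Limsup[OF trivial_limit_sequentially] by metis
      then show ?thesis using False by simp
    qed
  qed
qed

end

context setting begin

lemma Rm_set: "B \<in> sets (borel :: ereal measure) \<Longrightarrow> {0..} \<inter> B \<in> sets Rm"
  unfolding Rm_def sets_restrict_space by auto

lemma blockB_set:
  assumes a: "a \<ge> 0" and D: "D \<in> Gfilt Q F \<tau> a"
  shows "gsplit (\<lambda>p. indicator D (snd p) * indicator {a<..b} (fst p))"
proof -
  obtain N1 D' where N1: "N1 \<in> nullT" and D': "D' \<in> F a"
    and h1: "\<forall>\<omega>\<in>space Q - N1. ereal a < \<tau> \<omega> \<longrightarrow> (\<omega> \<in> D \<longleftrightarrow> \<omega> \<in> D')"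
    using good_D1[OF a D] unfolding goodset_def by auto
  define s where "s m = a + 1/(real m+1)" for m :: nat
  have s: "s m > a" for m unfolding s_def by simp
  have "\<forall>m. \<exists>N W. N \<in> nullT \<and> W \<in> sets (Rm \<Otimes>\<^sub>M Mt (s m)) \<and>
      (\<forall>\<omega>\<in>space Q - N. \<tau> \<omega> \<le> ereal a \<longrightarrow> (\<omega> \<in> D \<longleftrightarrow> (\<tau> \<omega>, \<omega>) \<in> W))"
    using good_D2[OF a s D] unfolding goodset_def by blast
  from choice[OF this] obtain N2 where "\<forall>m. \<exists>W. N2 m \<in> nullT \<and> W \<in> sets (Rm \<Otimes>\<^sub>M Mt (s m)) \<and>
      (\<forall>\<omega>\<in>space Q - N2 m. \<tau> \<omega> \<le> ereal a \<longrightarrow> (\<omega> \<in> D \<longleftrightarrow> (\<tau> \<omega>, \<omega>) \<in> W))" by blast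
  from choice[OF this] obtain W where NW: "\<forall>m. N2 m \<in> nullT \<and> W m \<in> sets (Rm \<Otimes>\<^sub>M Mt (s m)) \<and>
      (\<forall>\<omega>\<in>space Q - N2 m. \<tau> \<omega> \<le> ereal a \<longrightarrow> (\<omega> \<in> D \<longleftrightarrow> (\<tau> \<omega>, \<omega>) \<in> W m))" by blast
  define E1 where "E1 = ({0..} \<inter> {ereal a<..}) \<times> ({a<..b} \<times> D')"
  define S where "S m = {x \<in> space Om2. (fst x, snd (snd x)) \<in> W m \<and> s m < fst (snd x) \<and> fst (snd x) \<le> b}" for m
  define E2 where "E2 = (({0..} \<inter> {..ereal a}) \<times> space Om) \<inter> (\<Union>m. S m)"
  have E1: "E1 \<in> sets Om2" unfolding E1_def
    by (intro pair_measureI Rm_set rect_Om2[OF a D']) auto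
  have Sm: "S m \<in> sets Om2" for m unfolding S_def
    using s[of m] a NW by (intro strip_Om2) auto
  have E2: "E2 \<in> sets Om2" unfolding E2_def
    using Sm by (intro sets.Int pair_measureI Rm_set sets.countable_UN) auto
  show ?thesis
  proof (rule gsplitI[of "indicator ({a<..b} \<times> D')" "\<lambda>u p. indicator (E1 \<union> E2) (u, p)" "N1 \<union> (\<Union>m. N2 m)"])
    show "indicator ({a<..b} \<times> D') \<in> borel_measurable Om"
      using rect_Om2[OF a D'] by (rule borel_measurable_indicator)
    show "(\<lambda>z. indicator (E1 \<union> E2) (fst z, snd z) :: real) \<in> borel_measurable Om2"
      using E1 E2 by simp
    show "N1 \<union> (\<Union>m. N2 m) \<in> nullT" using N1 NW by (intro nullT_Un nullT_UN) auto
  next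
    fix \<omega> and t :: real assume \<omega>: "\<omega> \<in> space Q - (N1 \<union> (\<Union>m. N2 m))" and t: "t \<ge> 0"
    have \<tau>0: "\<tau> \<omega> \<ge> 0" using \<omega> tau_nn by auto
    have D'sub: "D' \<subseteq> space Q" using F_sub[OF a D'] .
    have \<omega>1: "\<omega> \<in> space Q - N1" and \<omega>2: "\<And>m. \<omega> \<in> space Q - N2 m" using \<omega> by auto
    have NW3: "\<forall>\<omega>\<in>space Q - N2 m. \<tau> \<omega> \<le> ereal a \<longrightarrow> (\<omega> \<in> D \<longleftrightarrow> (\<tau> \<omega>, \<omega>) \<in> W m)" for m
      using NW by blast
    have W: "\<And>m. \<tau> \<omega> \<le> ereal a \<Longrightarrow> (\<omega> \<in> D \<longleftrightarrow> (\<tau> \<omega>, \<omega>) \<in> W m)"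
      using NW3[rule_format, OF \<omega>2] .
    have h1': "ereal a < \<tau> \<omega> \<Longrightarrow> (\<omega> \<in> D \<longleftrightarrow> \<omega> \<in> D')" using h1[rule_format, OF \<omega>1] .
    show "indicator D (snd (t, \<omega>)) * indicator {a<..b} (fst (t, \<omega>)) =
      (if ereal t < \<tau> \<omega> then indicator ({a<..b} \<times> D') (t, \<omega>) else indicator (E1 \<union> E2) (\<tau> \<omega>, t, \<omega>) :: real)"
    proof (cases "ereal t < \<tau> \<omega>")
      case True
      show ?thesis
      proof (cases "t \<in> {a<..b}")
        case True': True
        then have "ereal a < ereal t" by simp
        then have "ereal a < \<tau> \<omega>" using True by (rule less_trans)
        then show ?thesis using True True' h1' by (simp add: indicator_def)
      qed (use True in \<open>auto simp add: indicator_def\<close>)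
    next
      case False
      have sp: "(\<tau> \<omega>, t, \<omega>) \<in> space Om2" using \<tau>0 t \<omega> by (simp add: space_Om2)
      have "(\<tau> \<omega>, t, \<omega>) \<in> E1 \<union> E2 \<longleftrightarrow> \<omega> \<in> D \<and> t \<in> {a<..b}"
      proof (cases "ereal a < \<tau> \<omega>")
        case True
        then have "(\<tau> \<omega>, t, \<omega>) \<notin> E2" unfolding E2_def by auto
        moreover have "(\<tau> \<omega>, t, \<omega>) \<in> E1 \<longleftrightarrow> \<omega> \<in> D' \<and> t \<in> {a<..b}"
          unfolding E1_def using True \<tau>0 by auto
        ultimately show ?thesis using h1' True by blast
      next
        case False': False
        then have "(\<tau> \<omega>, t, \<omega>) \<notin> E1" unfolding E1_def by auto
        moreover have "(\<tau> \<omega>, t, \<omega>) \<in> E2 \<longleftrightarrow> \<omega> \<in> D \<and> t \<in> {a<..b}"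
        proof
          assume "(\<tau> \<omega>, t, \<omega>) \<in> E2"
          then obtain m where "(\<tau> \<omega>, \<omega>) \<in> W m" "s m < t" "t \<le> b" unfolding E2_def S_def by auto
          then show "\<omega> \<in> D \<and> t \<in> {a<..b}" using W[of m] False' s[of m] by auto
        next
          assume "\<omega> \<in> D \<and> t \<in> {a<..b}"
          then have dt: "\<omega> \<in> D" "a < t" "t \<le> b" by auto
          obtain m where m: "1/(real m+1) < t - a" using arch[of "t-a"] dt by auto
          have "(\<tau> \<omega>, \<omega>) \<in> W m" using W[of m] False' dt by auto
          moreover have "s m < t" using m unfolding s_def by simp
          ultimately have "(\<tau> \<omega>, t, \<omega>) \<in> S m" unfolding S_def using sp dt by auto
          then show "(\<tau> \<omega>, t, \<omega>) \<in> E2" unfolding E2_def using False' \<tau>0 sp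
            by (auto simp: space_pair_measure)
        qed
        ultimately show ?thesis by blast
      qed
      then show ?thesis using False by (simp add: indicator_def)
    qed
  qed
qed

end

context setting begin

lemma blockA_set:
  assumes D: "D \<in> Gfilt Q F \<tau> 0"
  shows "gsplit (\<lambda>p. indicator D (snd p) * indicator {0} (fst p))"
proof -
  obtain N1 D' where N1: "N1 \<in> nullT" and D': "D' \<in> F 0"
    and h1: "\<forall>\<omega>\<in>space Q - N1. ereal 0 < \<tau> \<omega> \<longrightarrow> (\<omega> \<in> D \<longleftrightarrow> \<omega> \<in> D')"
    using good_D1[of 0 D] D unfolding goodset_def by auto
  obtain N3 C where N3: "N3 \<in> nullT" and C: "C \<in> F 0"
    and h3: "\<forall>\<omega>\<in>space Q - N3. \<tau> \<omega> \<le> 0 \<longrightarrow> (\<omega> \<in> D \<longleftrightarrow> \<omega> \<in> C)"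
    using good_D3[OF D] unfolding goodset_def by auto
  define E :: "(ereal \<times> real \<times> 'a) set" where "E = ({0..} \<inter> {0<..}) \<times> ({0} \<times> D') \<union> ({0..} \<inter> {..0}) \<times> ({0} \<times> C)"
  have E: "E \<in> sets Om2" unfolding E_def
    by (intro sets.Un pair_measureI Rm_set rect_Om0 D' C) auto
  show ?thesis
  proof (rule gsplitI[of "indicator ({0} \<times> D')" "\<lambda>u p. indicator E (u, p)" "N1 \<union> N3"])
    show "indicator ({0} \<times> D') \<in> borel_measurable Om"
      using rect_Om0[OF D'] by (rule borel_measurable_indicator)
    show "(\<lambda>z. indicator E (fst z, snd z) :: real) \<in> borel_measurable Om2"
      using E by simp
    show "N1 \<union> N3 \<in> nullT" using N1 N3 by (rule nullT_Un)
  next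
    fix \<omega> and t :: real assume \<omega>: "\<omega> \<in> space Q - (N1 \<union> N3)" and t: "t \<ge> 0"
    have \<tau>0: "\<tau> \<omega> \<ge> 0" using \<omega> tau_nn by auto
    have \<omega>1: "\<omega> \<in> space Q - N1" and \<omega>3: "\<omega> \<in> space Q - N3" using \<omega> by auto
    have h1': "ereal 0 < \<tau> \<omega> \<Longrightarrow> (\<omega> \<in> D \<longleftrightarrow> \<omega> \<in> D')" using h1[rule_format, OF \<omega>1] .
    have h3': "\<tau> \<omega> \<le> 0 \<Longrightarrow> (\<omega> \<in> D \<longleftrightarrow> \<omega> \<in> C)" using h3[rule_format, OF \<omega>3] .
    show "indicator D (snd (t, \<omega>)) * indicator {0} (fst (t, \<omega>)) =
      (if ereal t < \<tau> \<omega> then indicator ({0} \<times> D') (t, \<omega>) else indicator E (\<tau> \<omega>, t, \<omega>) :: real)"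
    proof (cases "t = 0")
      case False
      then show ?thesis unfolding E_def by (auto simp: indicator_def)
    next
      case True
      show ?thesis
      proof (cases "ereal t < \<tau> \<omega>")
        case lt: True
        then have "ereal 0 < \<tau> \<omega>" using \<open>t = 0\<close> by simp
        then show ?thesis using h1' lt \<open>t = 0\<close> by (simp add: indicator_def)
      next
        case ge: False
        then have "\<tau> \<omega> \<le> 0" using \<open>t = 0\<close> by (simp add: zero_ereal_def not_less)
        then have "\<not> 0 < \<tau> \<omega>" by simp
        then have "(\<tau> \<omega>, t, \<omega>) \<in> E \<longleftrightarrow> \<omega> \<in> C" unfolding E_def using \<open>t = 0\<close> \<tau>0 \<open>\<tau> \<omega> \<le> 0\<close> by auto
        then show ?thesis using h3' \<open>\<tau> \<omega> \<le> 0\<close> ge \<open>t = 0\<close> by (simp add: indicator_def)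
      qed
    qed
  qed
qed

end

context setting begin

lemma sigma_sets_Pow: "A \<subseteq> Pow sp \<Longrightarrow> sigma_sets sp A \<subseteq> Pow sp"
  using sigma_sets_into_sp by blast

lemma Gen_Pow: assumes a: "a \<ge> 0" shows "null_sigma Q (tau_Finf Q F \<tau>) \<union> Iset a \<subseteq> Pow (space Q)"
proof -
  have "null_sigma Q (tau_Finf Q F \<tau>) \<subseteq> Pow (space Q)"
    unfolding null_sigma_def using sets.sets_into_space by (intro sigma_sets_Pow) blast
  moreover have "Iset a \<subseteq> Pow (space Q)"
  proof
    fix E assume E: "E \<in> Iset a"
    have s: "a + 1 \<in> {a<..}" by simp
    have "F (a+1) \<union> sigma_rv (space Q) (\<lambda>\<omega>. min (\<tau> \<omega>) (ereal (a+1))) \<subseteq> Pow (space Q)"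
      using F_sub[of "a+1"] a unfolding sigma_rv_def by auto
    then show "E \<in> Pow (space Q)" using E s sigma_sets_Pow unfolding Iset_def by blast
  qed
  ultimately show ?thesis by auto
qed

lemma Gfilt_Pow: assumes a: "a \<ge> 0" shows "Gfilt Q F \<tau> a \<subseteq> Pow (space Q)"
  unfolding Gfilt_eq using Gen_Pow[OF a] by (rule sigma_sets_Pow)

lemma block_fun:
  assumes a: "a \<ge> 0"
    and hset: "\<And>D. D \<in> Gfilt Q F \<tau> a \<Longrightarrow> gsplit (\<lambda>p. indicator D (snd p) * h (fst p))"
    and Z: "\<forall>B\<in>sets (borel :: real measure). {\<omega>\<in>space Q. Z \<omega> \<in> B} \<in> Gfilt Q F \<tau> a"
  shows "gsplit (\<lambda>p. Z (snd p) * h (fst p))"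
proof -
  define M where "M = measure_of (space Q) (Gfilt Q F \<tau> a) (\<lambda>_. 0)"
  have P: "Gfilt Q F \<tau> a \<subseteq> Pow (space Q)" using Gfilt_Pow[OF a] .
  have spM: "space M = space Q" unfolding M_def using P by (simp add: space_measure_of_conv)
  have setsM: "sets M = Gfilt Q F \<tau> a" unfolding M_def using P
    using Gen_Pow[OF a] by (simp add: sets_measure_of Gfilt_eq sigma_sets_sigma_sets_eq)
  have Zm: "Z \<in> borel_measurable M"
  proof (rule measurableI)
    fix B :: "real set" assume "B \<in> sets borel"
    then have "{\<omega>\<in>space Q. Z \<omega> \<in> B} \<in> Gfilt Q F \<tau> a" using Z by blast
    moreover have "Z -` B \<inter> space M = {\<omega>\<in>space Q. Z \<omega> \<in> B}" using spM by auto
    ultimately show "Z -` B \<inter> space M \<in> sets M" using setsM by simp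
  qed simp
  obtain G where G: "\<And>i. simple_function M (G i)" "\<And>x. x \<in> space M \<Longrightarrow> (\<lambda>i. G i x) \<longlonglongrightarrow> Z x"
    using borel_measurable_implies_sequence_metric[OF Zm, of 0] by blast
  have gi: "gsplit (\<lambda>p. G i (snd p) * h (fst p))" for i
  proof -
    have fin: "finite (G i ` space M)" using G(1)[of i] unfolding simple_function_def by blast
    have pre: "G i -` {y} \<inter> space M \<in> Gfilt Q F \<tau> a" for y
      using simple_functionD(2)[OF G(1)[of i], of "{y}"] setsM by simp
    have "gsplit (\<lambda>p. \<Sum>y\<in>G i ` space M. y * (indicator (G i -` {y} \<inter> space M) (snd p) * h (fst p)))"
      using fin pre by (intro gsplit_sum gsplit_cmult hset) auto
    then show ?thesis
    proof (rule gsplit_cong)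
      fix t and \<omega> assume "\<omega> \<in> space Q"
      then have \<omega>M: "\<omega> \<in> space M" using spM by simp
      have "(\<Sum>y\<in>G i ` space M. y * indicator (G i -` {y} \<inter> space M) \<omega>) =
            (\<Sum>y\<in>G i ` space M. if y = G i \<omega> then G i \<omega> else 0)"
        using \<omega>M by (intro sum.cong) (auto simp: indicator_def)
      also have "\<dots> = G i \<omega>" using fin \<omega>M by (simp add: sum.delta')
      finally have rep: "G i \<omega> = (\<Sum>y\<in>G i ` space M. y * indicator (G i -` {y} \<inter> space M) \<omega>)" by (rule sym)
      then show "G i (snd (t, \<omega>)) * h (fst (t, \<omega>)) =
          (\<Sum>y\<in>G i ` space M. y * (indicator (G i -` {y} \<inter> space M) (snd (t, \<omega>)) * h (fst (t, \<omega>))))"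
        unfolding fst_conv snd_conv by (subst rep) (simp only: sum_distrib_right mult.assoc)
    qed
  qed
  show ?thesis
  proof (rule gsplit_lim[OF gi])
    fix t and \<omega> assume "\<omega> \<in> space Q"
    then show "(\<lambda>n. G n (snd (t, \<omega>)) * h (fst (t, \<omega>))) \<longlonglongrightarrow> Z (snd (t, \<omega>)) * h (fst (t, \<omega>))"
      using G(2) spM by (auto intro: tendsto_mult_right)
  qed
qed

lemma blockB_fun:
  assumes a: "a \<ge> 0" and Z: "\<forall>B\<in>sets (borel :: real measure). {\<omega>\<in>space Q. Z \<omega> \<in> B} \<in> Gfilt Q F \<tau> a"
  shows "gsplit (\<lambda>p. Z (snd p) * indicator {a<..b} (fst p))"
  by (rule block_fun[OF a blockB_set[OF a] Z])

lemma blockA_fun: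
  assumes Z: "\<forall>B\<in>sets (borel :: real measure). {\<omega>\<in>space Q. Z \<omega> \<in> B} \<in> Gfilt Q F \<tau> 0"
  shows "gsplit (\<lambda>p. Z (snd p) * indicator {0} (fst p))"
  by (rule block_fun[OF _ blockA_set Z]) auto

end

lemma grid_mem:
  fixes t :: real and k n :: nat
  shows "(real k / 2^n < t \<and> t \<le> (real k + 1) / 2^n) \<longleftrightarrow> \<lceil>t * 2^n\<rceil> = int k + 1"
proof -
  have p: "(0::real) < 2^n" by simp
  have "(real k / 2^n < t \<and> t \<le> (real k + 1) / 2^n) \<longleftrightarrow> (real k < t * 2^n \<and> t * 2^n \<le> real k + 1)"
    using p by (simp add: divide_less_eq le_divide_eq)
  also have "\<dots> \<longleftrightarrow> \<lceil>t * 2^n\<rceil> = int k + 1" by (simp add: ceiling_eq_iff)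
  finally show ?thesis .
qed

definition gridp :: "real \<Rightarrow> nat \<Rightarrow> real" where
  "gridp t n = (of_int \<lceil>t * 2^n\<rceil> - 1) / 2^n"

lemma gridp_less: "gridp t n < t"
proof -
  have "of_int \<lceil>t * 2^n\<rceil> - 1 < t * 2^n" by linarith
  then show ?thesis unfolding gridp_def by (simp add: divide_less_eq)
qed

lemma gridp_ge: "t - (1/2)^n \<le> gridp t n"
proof -
  have "t * 2^n \<le> of_int \<lceil>t * 2^n\<rceil>" by (rule le_of_int_ceiling)
  then have "t * 2^n - 1 \<le> of_int \<lceil>t * 2^n\<rceil> - 1" by simp
  then have "(t * 2^n - 1) / 2^n \<le> (of_int \<lceil>t * 2^n\<rceil> - 1) / 2^n" by (simp add: divide_right_mono)
  moreover have "(t * 2^n - 1) / 2^n = t - (1/2)^n" by (simp add: field_simps)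
  ultimately show ?thesis unfolding gridp_def by simp
qed

lemma gridp_lim: "gridp t \<longlonglongrightarrow> t"
proof (rule tendsto_sandwich[of "\<lambda>n. t - (1/2)^n" _ _ "\<lambda>n. t"])
  show "\<forall>\<^sub>F n in sequentially. t - (1 / 2) ^ n \<le> gridp t n" using gridp_ge by simp
  show "\<forall>\<^sub>F n in sequentially. gridp t n \<le> t" using gridp_less[of t] by (simp add: less_imp_le)
  have "(\<lambda>n. t - (1/2::real)^n) \<longlonglongrightarrow> t - 0"
    by (intro tendsto_diff tendsto_const LIMSEQ_realpow_zero) auto
  then show "(\<lambda>n. t - (1 / 2) ^ n) \<longlonglongrightarrow> t" by simp
qed auto

lemma gridp_nonneg: "t > 0 \<Longrightarrow> gridp t n \<ge> 0"
proof -
  assume t: "t > 0"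
  then have "t * 2^n > 0" by simp
  then have "\<lceil>t * 2^n\<rceil> \<ge> 1" by linarith
  then show ?thesis unfolding gridp_def by simp
qed

lemma gridp_nat: "t > 0 \<Longrightarrow> gridp t n = real (nat (\<lceil>t * 2^n\<rceil> - 1)) / 2^n"
proof -
  assume t: "t > 0"
  then have "t * 2^n > 0" by simp
  then have "\<lceil>t * 2^n\<rceil> \<ge> 1" by linarith
  then show ?thesis unfolding gridp_def by simp
qed

context setting begin

lemma gsplit_lc:
  assumes lc: "left_continuous (space Q) X" and ad: "adapted (space Q) (Gfilt Q F \<tau>) X"
  shows "gsplit X"
proof -
  define A where "A n p = X (0, snd p) * indicator {0} (fst p) +
     (\<Sum>k<n*2^n. X (real k / 2^n, snd p) * indicator {real k / 2^n<..(real k + 1) / 2^n} (fst p))" for n :: nat and p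
  have Z: "\<forall>B\<in>sets (borel :: real measure). {\<omega>\<in>space Q. X (t, \<omega>) \<in> B} \<in> Gfilt Q F \<tau> t" if "t \<ge> 0" for t
    using ad that unfolding adapted_def by blast
  have gA: "gsplit (A n)" for n
    unfolding A_def
  proof (intro gsplit_add gsplit_sum blockA_fun blockB_fun Z)
    fix k assume "k \<in> {..<n*2^n}"
    show "0 \<le> real k / 2^n" by simp
  qed auto
  show ?thesis
  proof (rule gsplit_lim[OF gA])
    fix t :: real and \<omega> assume t: "t \<ge> 0" and \<omega>: "\<omega> \<in> space Q"
    show "(\<lambda>n. A n (t, \<omega>)) \<longlonglongrightarrow> X (t, \<omega>)"
    proof (cases "t = 0")
      case True
      have "A n (t, \<omega>) = X (t, \<omega>)" for n
      proof -
        have "indicator {real k / 2^n<..(real k + 1) / 2^n} t = (0::real)" for k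
          using True by (simp add: indicator_def not_less)
        then show ?thesis unfolding A_def using True by simp
      qed
      then show ?thesis by simp
    next
      case False
      then have tp: "t > 0" using t by simp
      define k0 where "k0 n = nat (\<lceil>t * 2^n\<rceil> - 1)" for n :: nat
      have c1: "\<lceil>t * 2^n\<rceil> \<ge> 1" for n :: nat
      proof -
        have "t * 2^n > 0" using tp by simp
        then show ?thesis by linarith
      qed
      have ev: "A n (t, \<omega>) = X (gridp t n, \<omega>)" if n: "real n \<ge> t" for n
      proof -
        have ind: "indicator {real k / 2^n<..(real k + 1) / 2^n} t = (if k = k0 n then 1 else (0::real))" for k
        proof -
          have "t \<in> {real k / 2^n<..(real k + 1) / 2^n} \<longleftrightarrow> \<lceil>t * 2^n\<rceil> = int k + 1"
            using grid_mem[of k n t] by simp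
          also have "\<dots> \<longleftrightarrow> k = k0 n" unfolding k0_def using c1[of n] by auto
          finally show ?thesis by (simp add: indicator_def)
        qed
        have "t * 2^n \<le> real n * 2^n" using n by (simp add: mult_right_mono)
        then have "\<lceil>t * 2^n\<rceil> \<le> int (n * 2^n)" by (simp add: ceiling_le_iff)
        then have k0lt: "k0 n < n * 2^n" unfolding k0_def using c1[of n] by linarith
        have "A n (t, \<omega>) = (\<Sum>k<n*2^n. if k = k0 n then X (real k / 2^n, \<omega>) else 0)"
          unfolding A_def using tp by (simp add: ind if_distrib cong: if_cong)
        also have "\<dots> = X (real (k0 n) / 2^n, \<omega>)" using k0lt by (simp add: sum.delta)
        also have "real (k0 n) / 2^n = gridp t n" unfolding k0_def using gridp_nat[OF tp] by simp
        finally show ?thesis .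
      qed
      obtain N :: nat where N: "real N \<ge> t" using real_nat_ceiling_ge by blast
      have evs: "eventually (\<lambda>n. X (gridp t n, \<omega>) = A n (t, \<omega>)) sequentially"
        using ev N by (intro eventually_sequentiallyI[of N]) (auto intro: order_trans)
      have lim: "((\<lambda>s. X (s, \<omega>)) \<longlongrightarrow> X (t, \<omega>)) (at_left t)"
        using lc tp \<omega> unfolding left_continuous_def by blast
      have fl: "filterlim (gridp t) (at_left t) sequentially"
        by (rule tendsto_imp_filterlim_at_left[OF gridp_lim]) (simp add: gridp_less)
      have "(\<lambda>n. X (gridp t n, \<omega>)) \<longlonglongrightarrow> X (t, \<omega>)"
        using filterlim_compose[OF lim fl] by simp
      then show ?thesis using tendsto_cong[OF evs] by simp
    qed
  qed
qed

end

context setting begin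

definition PGen :: "(real \<times> 'a) set set" where
  "PGen = {{p\<in>{0..} \<times> space Q. X p \<in> B} | X B. left_continuous (space Q) X \<and> adapted (space Q) (Gfilt Q F \<tau>) X \<and> B \<in> sets (borel :: real measure)}"

lemma sets_Pred: "sets (predictable_measure (space Q) (Gfilt Q F \<tau>)) = sigma_sets ({0..} \<times> space Q) PGen"
proof -
  have "PGen \<subseteq> Pow ({0..} \<times> space Q)" unfolding PGen_def by auto
  then show ?thesis unfolding predictable_measure_def PGen_def[symmetric] by (simp add: sets_measure_of)
qed

lemma indicator_Un_max: "indicator (A \<union> B) x = max (indicator A x) (indicator B x :: real)"
  by (simp add: indicator_def)

lemma gsplit_finite_UN:
  assumes "\<And>i. gsplit (indicator (A i))"
  shows "gsplit (indicator (\<Union>i<(n::nat). A i))"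
proof (induction n)
  case 0 then show ?case using gsplit_const[of 0] by simp
next
  case (Suc n)
  have "gsplit (\<lambda>p. max (indicator (A n) p) (indicator (\<Union>i<n. A i) p))"
    by (rule gsplit_max[OF assms Suc])
  moreover have "(\<Union>i<Suc n. A i) = A n \<union> (\<Union>i<n. A i)" by (auto simp: lessThan_Suc)
  ultimately show ?case by (simp add: indicator_Un_max)
qed

lemma gsplit_pred:
  assumes "A \<in> sets (predictable_measure (space Q) (Gfilt Q F \<tau>))"
  shows "gsplit (indicator A)"
proof -
  have "A \<in> sigma_sets ({0..} \<times> space Q) PGen" using assms sets_Pred by simp
  then show ?thesis
proof (induction rule: sigma_sets.induct)
  case (Basic a)
  then have "\<exists>X B. a = {p\<in>{0..} \<times> space Q. X p \<in> B} \<and> left_continuous (space Q) X \<and>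
    adapted (space Q) (Gfilt Q F \<tau>) X \<and> B \<in> sets (borel :: real measure)"
    unfolding PGen_def by (simp only: mem_Collect_eq)
  then obtain X B where a: "a = {p\<in>{0..} \<times> space Q. X p \<in> B}" and X: "left_continuous (space Q) X"
    "adapted (space Q) (Gfilt Q F \<tau>) X" and B: "B \<in> sets (borel :: real measure)"
    by (elim exE conjE)
  have "indicator B \<in> borel_measurable (borel :: real measure)" using B by (rule borel_measurable_indicator)
  then have g: "gsplit (\<lambda>p. indicator B (X p))" by (rule gsplit_comp[OF gsplit_lc[OF X]])
  show ?case
  proof (rule gsplit_cong[OF g])
    fix t :: real and \<omega> assume "t \<ge> 0" "\<omega> \<in> space Q"
    then have "(t, \<omega>) \<in> a \<longleftrightarrow> X (t, \<omega>) \<in> B" unfolding a by simp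
    then show "indicator a (t, \<omega>) = (indicator B (X (t, \<omega>)) :: real)" by (simp add: indicator_def)
  qed
next
  case Empty then show ?case using gsplit_const[of 0] by simp
next
  case (Compl a)
  have "gsplit (\<lambda>p. 1 - indicator a p)" by (rule gsplit_diff[OF gsplit_const Compl.IH])
  then show ?case by (rule gsplit_cong) (auto simp: indicator_def)
next
  case (Union a)
  show ?case
  proof (rule gsplit_lim[of "\<lambda>n. indicator (\<Union>i<n. a i)"])
    show "gsplit (indicator (\<Union>i<n. a i))" for n using Union by (intro gsplit_finite_UN)
    show "(\<lambda>n. indicator (\<Union>i<n. a i) (t, \<omega>)) \<longlonglongrightarrow> indicator (\<Union>i. a i) (t, \<omega>)" for t \<omega>
      by (rule LIMSEQ_indicator_UN)
  qed
qed
qed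

lemma os_times_indicator:
  assumes os: "optional_splitting Q F \<tau> Y A" and gA: "gsplit (indicator A)"
  shows "gsplit (\<lambda>p. Y p * indicator A p)"
proof -
  obtain Y' Y'' where H: "Y' \<in> borel_measurable (optional_measure (space Q) F) \<and>
        (\<lambda>(u, p). Y'' u p) \<in> borel_measurable
            (restrict_space (borel :: ereal measure) {0..} \<Otimes>\<^sub>M optional_measure (space Q) F) \<and>
        (\<exists>Nl \<in> tau_Finf Q F \<tau>. Nl \<in> sets Q \<and> emeasure Q Nl = 0 \<and>
           (\<forall>\<omega>\<in>space Q - Nl. \<forall>t\<ge>0.
              Y (t, \<omega>) * indicator A (t, \<omega>) =
              (Y' (t, \<omega>) * indicator {p. ereal (fst p) < \<tau> (snd p)} (t, \<omega>)
               + Y'' (\<tau> \<omega>) (t, \<omega>) * indicator {p. \<tau> (snd p) \<le> ereal (fst p)} (t, \<omega>))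
              * indicator A (t, \<omega>)))"
    using os unfolding optional_splitting_def by (elim exE) (rule that)
  have Y': "Y' \<in> borel_measurable Om" using conjunct1[OF H] .
  have Y'': "(\<lambda>(u, p). Y'' u p) \<in> borel_measurable Om2" using conjunct1[OF conjunct2[OF H]] unfolding Rm_def .
  from H obtain Nl where Nl: "Nl \<in> tau_Finf Q F \<tau>" "Nl \<in> sets Q" "emeasure Q Nl = 0"
    and eq: "\<forall>\<omega>\<in>space Q - Nl. \<forall>t\<ge>0.
              Y (t, \<omega>) * indicator A (t, \<omega>) =
              (Y' (t, \<omega>) * indicator {p. ereal (fst p) < \<tau> (snd p)} (t, \<omega>)
               + Y'' (\<tau> \<omega>) (t, \<omega>) * indicator {p. \<tau> (snd p) \<le> ereal (fst p)} (t, \<omega>))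
              * indicator A (t, \<omega>)"
    by (elim conjE bexE) (rule that)
  obtain Z' :: "real \<times> 'a \<Rightarrow> real" and Z'' N where Z': "Z' \<in> borel_measurable Om" and Z'': "(\<lambda>z. Z'' (fst z) (snd z)) \<in> borel_measurable Om2"
    and N: "N \<in> nullT" and eqZ: "\<And>\<omega> t. \<omega> \<in> space Q - N \<Longrightarrow> t \<ge> 0 \<Longrightarrow>
        indicator A (t, \<omega>) = (if ereal t < \<tau> \<omega> then Z' (t, \<omega>) else (Z'' (\<tau> \<omega>) (t, \<omega>) :: real))"
    using gsplitE[OF gA] by blast
  have Nl': "Nl \<in> nullT" using Nl unfolding nullT_def by simp
  show ?thesis
  proof (rule gsplitI[of "\<lambda>p. Y' p * Z' p" "\<lambda>u p. Y'' u p * Z'' u p" "Nl \<union> N"])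
    show "(\<lambda>p. Y' p * Z' p) \<in> borel_measurable Om" by (rule borel_measurable_times[OF Y' Z'])
    have "(\<lambda>z. Y'' (fst z) (snd z)) \<in> borel_measurable Om2" using Y'' unfolding split_beta' .
    then show "(\<lambda>z. Y'' (fst z) (snd z) * Z'' (fst z) (snd z)) \<in> borel_measurable Om2"
      by (rule borel_measurable_times[OF _ Z''])
    show "Nl \<union> N \<in> nullT" using Nl' N by (rule nullT_Un)
  next
    fix \<omega> and t :: real assume \<omega>: "\<omega> \<in> space Q - (Nl \<union> N)" and t: "t \<ge> 0"
    have \<omega>l: "\<omega> \<in> space Q - Nl" and \<omega>n: "\<omega> \<in> space Q - N" using \<omega> by auto
    have e1: "Y (t, \<omega>) * indicator A (t, \<omega>) =
              (Y' (t, \<omega>) * indicator {p. ereal (fst p) < \<tau> (snd p)} (t, \<omega>)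
               + Y'' (\<tau> \<omega>) (t, \<omega>) * indicator {p. \<tau> (snd p) \<le> ereal (fst p)} (t, \<omega>))
              * indicator A (t, \<omega>)" using eq[rule_format, OF \<omega>l t] .
    have e2: "indicator A (t, \<omega>) = (if ereal t < \<tau> \<omega> then Z' (t, \<omega>) else Z'' (\<tau> \<omega>) (t, \<omega>))"
      using eqZ[OF \<omega>n t] .
    show "Y (t, \<omega>) * indicator A (t, \<omega>) =
      (if ereal t < \<tau> \<omega> then Y' (t, \<omega>) * Z' (t, \<omega>) else Y'' (\<tau> \<omega>) (t, \<omega>) * Z'' (\<tau> \<omega>) (t, \<omega>))"
    proof (cases "ereal t < \<tau> \<omega>")
      case True
      have i1: "indicator {p. ereal (fst p) < \<tau> (snd p)} (t, \<omega>) = (1::real)" using True by simp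
      have i2: "indicator {p. \<tau> (snd p) \<le> ereal (fst p)} (t, \<omega>) = (0::real)" using True by (simp add: not_le)
      have "Y (t, \<omega>) * indicator A (t, \<omega>) = Y' (t, \<omega>) * indicator A (t, \<omega>)"
        using e1 unfolding i1 i2 by simp
      also have "\<dots> = Y' (t, \<omega>) * Z' (t, \<omega>)" using e2 True by simp
      finally show ?thesis using True by simp
    next
      case False
      have i1: "indicator {p. ereal (fst p) < \<tau> (snd p)} (t, \<omega>) = (0::real)" using False by simp
      have i2: "indicator {p. \<tau> (snd p) \<le> ereal (fst p)} (t, \<omega>) = (1::real)" using False by (simp add: not_less)
      have "Y (t, \<omega>) * indicator A (t, \<omega>) = Y'' (\<tau> \<omega>) (t, \<omega>) * indicator A (t, \<omega>)"
        using e1 unfolding i1 i2 by simp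
      also have "\<dots> = Y'' (\<tau> \<omega>) (t, \<omega>) * Z'' (\<tau> \<omega>) (t, \<omega>)" using e2 False by simp
      finally show ?thesis using False by simp
    qed
  qed
qed

lemma gsplit_to_os:
  assumes g: "gsplit (\<lambda>p. Y p * indicator U p)"
  shows "optional_splitting Q F \<tau> Y U"
proof -
  obtain Y' Y'' N where Y': "Y' \<in> borel_measurable Om" and Y'': "(\<lambda>z. Y'' (fst z) (snd z)) \<in> borel_measurable Om2"
    and N: "N \<in> nullT" and eq: "\<And>\<omega> t. \<omega> \<in> space Q - N \<Longrightarrow> t \<ge> 0 \<Longrightarrow>
        Y (t, \<omega>) * indicator U (t, \<omega>) = (if ereal t < \<tau> \<omega> then Y' (t, \<omega>) else Y'' (\<tau> \<omega>) (t, \<omega>))"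
    using gsplitE[OF g] by blast
  have Y''2: "(\<lambda>(u, p). Y'' u p) \<in> borel_measurable (restrict_space (borel :: ereal measure) {0..} \<Otimes>\<^sub>M optional_measure (space Q) F)"
    using Y'' unfolding Rm_def split_beta' .
  have N': "N \<in> tau_Finf Q F \<tau>" "N \<in> sets Q" "emeasure Q N = 0" using N unfolding nullT_def by auto
  have "\<forall>\<omega>\<in>space Q - N. \<forall>t\<ge>0.
              Y (t, \<omega>) * indicator U (t, \<omega>) =
              (Y' (t, \<omega>) * indicator {p. ereal (fst p) < \<tau> (snd p)} (t, \<omega>)
               + Y'' (\<tau> \<omega>) (t, \<omega>) * indicator {p. \<tau> (snd p) \<le> ereal (fst p)} (t, \<omega>))
              * indicator U (t, \<omega>)"
  proof (intro ballI allI impI)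
    fix \<omega> and t :: real assume \<omega>: "\<omega> \<in> space Q - N" and t: "t \<ge> 0"
    have e: "Y (t, \<omega>) * indicator U (t, \<omega>) = (if ereal t < \<tau> \<omega> then Y' (t, \<omega>) else Y'' (\<tau> \<omega>) (t, \<omega>))"
      using eq[OF \<omega> t] .
    show "Y (t, \<omega>) * indicator U (t, \<omega>) =
              (Y' (t, \<omega>) * indicator {p. ereal (fst p) < \<tau> (snd p)} (t, \<omega>)
               + Y'' (\<tau> \<omega>) (t, \<omega>) * indicator {p. \<tau> (snd p) \<le> ereal (fst p)} (t, \<omega>))
              * indicator U (t, \<omega>)"
    proof (cases "(t, \<omega>) \<in> U")
      case True
      then show ?thesis using e by (auto simp: indicator_def not_less)
    next
      case False
      then show ?thesis by simp
    qed
  qed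
  then have "\<exists>Nl \<in> tau_Finf Q F \<tau>. Nl \<in> sets Q \<and> emeasure Q Nl = 0 \<and> (\<forall>\<omega>\<in>space Q - Nl. \<forall>t\<ge>0.
              Y (t, \<omega>) * indicator U (t, \<omega>) =
              (Y' (t, \<omega>) * indicator {p. ereal (fst p) < \<tau> (snd p)} (t, \<omega>)
               + Y'' (\<tau> \<omega>) (t, \<omega>) * indicator {p. \<tau> (snd p) \<le> ereal (fst p)} (t, \<omega>))
              * indicator U (t, \<omega>))"
    using N' by (intro bexI[of _ N] conjI)
  then show ?thesis unfolding optional_splitting_def using Y' Y''2 by (intro exI[of _ Y'] exI[of _ Y''] conjI)
qed

end

theorem mainTheorem5:
  fixes Q :: "'a measure" and F :: "real \<Rightarrow> 'a set set" and \<tau> :: "'a \<Rightarrow> ereal"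
    and As :: "nat \<Rightarrow> (real \<times> 'a) set"
  assumes "prob_space Q"
    and "rc_filtration Q F"
    and "null_sigma Q (F_infty (space Q) F) \<subseteq> F 0"
    and "\<tau> \<in> borel_measurable Q"
    and "\<forall>\<omega>\<in>space Q. 0 \<le> \<tau> \<omega>"
    and "\<forall>i. As i \<in> sets (predictable_measure (space Q) (Gfilt Q F \<tau>))"
    and "\<forall>i. As i \<in> Lo Q F \<tau>"
  shows "(\<Union>i. As i) \<in> Lo Q F \<tau>"
proof -
  interpret setting Q F \<tau> using assms(2,4,5) by unfold_locales
  let ?G = "optional_measure (space Q) (Gfilt Q F \<tau>)"
  have As: "As i \<in> sets ?G" for i using assms(7) unfolding Lo_def by blast
  have osA: "\<And>Y. Y \<in> borel_measurable ?G \<Longrightarrow> optional_splitting Q F \<tau> Y (As i)" for i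
    using assms(7) unfolding Lo_def by blast
  have gA: "gsplit (indicator (As i))" for i using assms(6) gsplit_pred by blast
  have "(\<Union>i. As i) \<in> sets ?G" using As by blast
  moreover have "optional_splitting Q F \<tau> Y (\<Union>i. As i)" if Y: "Y \<in> borel_measurable ?G" for Y
  proof -
    have gYA: "gsplit (\<lambda>p. Y p * indicator (As i) p)" for i
      using os_times_indicator[OF osA[OF Y] gA] .
    have fin: "gsplit (\<lambda>p. Y p * indicator (\<Union>i<n. As i) p)" for n
    proof (induction n)
      case 0 then show ?case using gsplit_const[of 0] by simp
    next
      case (Suc n)
      let ?V = "\<Union>i<n. As i"
      have g: "gsplit (\<lambda>p. Y p * indicator (As n) p + Y p * indicator ?V p - (Y p * indicator (As n) p) * indicator ?V p)"
        by (rule gsplit_diff[OF gsplit_add[OF gYA[of n] Suc] gsplit_mult[OF gYA[of n] gsplit_finite_UN[OF gA]]])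
      have eqU: "(\<Union>i<Suc n. As i) = As n \<union> ?V" by (auto simp: lessThan_Suc)
      show ?case
      proof (rule gsplit_cong[OF g])
        fix t \<omega>
        show "Y (t, \<omega>) * indicator (\<Union>i<Suc n. As i) (t, \<omega>) =
          Y (t, \<omega>) * indicator (As n) (t, \<omega>) + Y (t, \<omega>) * indicator ?V (t, \<omega>) - (Y (t, \<omega>) * indicator (As n) (t, \<omega>)) * indicator ?V (t, \<omega>)"
          unfolding eqU by (simp add: indicator_def)
      qed

    qed
    have "gsplit (\<lambda>p. Y p * indicator (\<Union>i. As i) p)"
    proof (rule gsplit_lim[OF fin])
      fix t \<omega>
      show "(\<lambda>n. Y (t, \<omega>) * indicator (\<Union>i<n. As i) (t, \<omega>)) \<longlonglongrightarrow> Y (t, \<omega>) * indicator (\<Union>i. As i) (t, \<omega>)"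
        by (intro tendsto_mult_left LIMSEQ_indicator_UN)
    qed
    then show ?thesis by (rule gsplit_to_os)
  qed
  ultimately show ?thesis unfolding Lo_def by blast
qed

end
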